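(* Let $g_0,g_1,b,T$ and the mild skew product $G$ with fibre maps $f_\omega$ be as in the context, with $\delta>0$ sufficiently small. Let $\alpha=\alpha_{-n}\ldots\alpha_{n-1}$ be a word and $\phi_1\ne\phi_2$ points of $S^1$. Then there exists a word $\bar\beta=\beta_{-m}\ldots\beta_{-n-1}\alpha_{-n}\ldots\alpha_{n-1}\beta_n\ldots\beta_{m-1}$ such that the words $\beta_{-m}\ldots\beta_{-n-1}$ and $\beta_n\ldots\beta_{m-1}$ cannot contain fewer than $T$ zeros in a row (every maximal block of consecutive zeros in them has length at least $T$), and $d_{S^1}(V_+[\bar\beta](\phi_1),V_+[\bar\beta](\phi_2))\ge2b$ and $d_{S^1}(V_-[\bar\beta](\phi_1),V_-[\bar\beta](\phi_2))\ge2b$.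
   Context: $S^1=\mathbb R/\mathbb Z$; $\Sigma^2$ is the space of two-sided $0$-$1$ sequences with shift $\sigma$. $g_0$ is the rotation by $b<1/100$; $g_1$ is an orientation-preserving circle diffeomorphism with exactly two nonwandering points, an attractor $1/2$ and a repeller $0$, linear expanding with constant $a>1$ on the $1/8$-neighborhood of $0$ and linear contracting with constant $1/a$ on the $1/8$-neighborhood of $1/2$. $T$ is a fixed positive integer. $G(\omega,\phi)=(\sigma(\omega),f_\omega(\phi))$ is a mild skew product with $f_\omega$ in the $C^1$ $\delta$-ball around $g_{\omega_0}$ ($\omega_0$ the symbol at position $0$), satisfying $\max_{\omega,\phi}\max(\|Df_\omega(\phi)\|,\|Df^{-1}_\omega(\phi)\|)<2^{\alpha}$ and $d_{C^0}(f_\omega,f_{\omega'})\le C d_{\Sigma^2}(\omega,\omega')^{\alpha}$ for fixed constants $C,\alpha$. Notation: $\bar f_m[\omega]=f_{\sigma^{m-1}(\omega)}\circ\cdots\circ f_\omega$, $\bar f_{-m}[\omega]=f^{-1}_{\sigma^{-m}(\omega)}\circ\cdots\circ f^{-1}_{\sigma^{-1}(\omega)}$. For a word $\bar\beta=\beta_{-m}\ldots\beta_{m-1}$, $C_{\bar\beta}$ is the set of $\omega\in\Sigma^2$ whose symbols at positions $-m,\ldots,m-1$ are $\beta_{-m},\ldots,\beta_{m-1}$, and $V_\pm[\bar\beta](\phi)=\{\bar f_{\pm m}[\omega](\phi):\omega\in C_{\bar\beta}\}$. The distance $d_{S^1}$ between two subsets of the circle is the length of the shortest arc connecting a point of one to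 a point of the other. *)

theory Defs
  imports "HOL-Analysis.Analysis"
begin

text \<open>The circle S^1 = R/Z: points are represented by real numbers (modulo 1);
  circle maps are represented by their lifts R -> R.\<close>

definition circ_dist :: "real \<Rightarrow> real \<Rightarrow> real" where
  "circ_dist x y = min (frac (x - y)) (1 - frac (x - y))"

definition set_circ_dist :: "real set \<Rightarrow> real set \<Rightarrow> real" where
  "set_circ_dist A B = Inf {circ_dist x y | x y. x \<in> A \<and> y \<in> B}"

definition circle_diffeo :: "(real \<Rightarrow> real) \<Rightarrow> bool" where
  "circle_diffeo F \<longleftrightarrow> (\<forall>x. F (x + 1) = F x + 1)
     \<and> (\<forall>x. (F has_real_derivative deriv F x) (at x))
     \<and> continuous_on UNIV (deriv F)
     \<and> (\<forall>x. deriv F x > 0)"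

definition nonwandering :: "(real \<Rightarrow> real) \<Rightarrow> real \<Rightarrow> bool" where
  "nonwandering F x \<longleftrightarrow> (\<forall>\<epsilon>>0. \<exists>n\<ge>1. \<exists>y.
      circ_dist y x < \<epsilon> \<and> circ_dist ((F ^^ n) y) x < \<epsilon>)"

definition C1_close :: "real \<Rightarrow> (real \<Rightarrow> real) \<Rightarrow> (real \<Rightarrow> real) \<Rightarrow> bool" where
  "C1_close \<delta> F G \<longleftrightarrow>
     (SUP x. circ_dist (F x) (G x)) < \<delta> \<and> (SUP x. \<bar>deriv F x - deriv G x\<bar>) < \<delta>"

definition Sigma2 :: "(int \<Rightarrow> nat) set" where
  "Sigma2 = {\<omega>. \<forall>i. \<omega> i \<le> 1}"

definition shift :: "int \<Rightarrow> (int \<Rightarrow> nat) \<Rightarrow> (int \<Rightarrow> nat)" where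
  "shift k \<omega> = (\<lambda>i. \<omega> (i + k))"

definition dSigma :: "(int \<Rightarrow> nat) \<Rightarrow> (int \<Rightarrow> nat) \<Rightarrow> real" where
  "dSigma \<omega> \<omega>' = (if \<omega> = \<omega>' then 0
     else 2 powr (- real (LEAST k::nat. \<exists>i. \<bar>i\<bar> = int k \<and> \<omega> i \<noteq> \<omega>' i)))"

fun fwd :: "((int \<Rightarrow> nat) \<Rightarrow> real \<Rightarrow> real) \<Rightarrow> nat \<Rightarrow> (int \<Rightarrow> nat) \<Rightarrow> real \<Rightarrow> real" where
  "fwd f 0 \<omega> = id"
| "fwd f (Suc m) \<omega> = fwd f m (shift 1 \<omega>) \<circ> f \<omega>"

fun bwd :: "((int \<Rightarrow> nat) \<Rightarrow> real \<Rightarrow> real) \<Rightarrow> nat \<Rightarrow> (int \<Rightarrow> nat) \<Rightarrow> real \<Rightarrow> real" where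
  "bwd f 0 \<omega> = id"
| "bwd f (Suc m) \<omega> = bwd f m (shift (-1) \<omega>) \<circ> inv (f (shift (-1) \<omega>))"

text \<open>Cylinder of a word \<open>\<beta>_{-m} ... \<beta>_{m-1}\<close> (word given as a function on Z,
  only the positions -m..m-1 matter).\<close>
definition cylinder :: "nat \<Rightarrow> (int \<Rightarrow> nat) \<Rightarrow> (int \<Rightarrow> nat) set" where
  "cylinder m \<beta> = {\<omega> \<in> Sigma2. \<forall>i. - int m \<le> i \<and> i < int m \<longrightarrow> \<omega> i = \<beta> i}"

definition Vplus :: "((int \<Rightarrow> nat) \<Rightarrow> real \<Rightarrow> real) \<Rightarrow> nat \<Rightarrow> (int \<Rightarrow> nat) \<Rightarrow> real \<Rightarrow> real set" where
  "Vplus f m \<beta> \<phi> = {fwd f m \<omega> \<phi> | \<omega>. \<omega> \<in> cylinder m \<beta>}"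

definition Vminus :: "((int \<Rightarrow> nat) \<Rightarrow> real \<Rightarrow> real) \<Rightarrow> nat \<Rightarrow> (int \<Rightarrow> nat) \<Rightarrow> real \<Rightarrow> real set" where
  "Vminus f m \<beta> \<phi> = {bwd f m \<omega> \<phi> | \<omega>. \<omega> \<in> cylinder m \<beta>}"

definition zero_blocks_ge :: "nat \<Rightarrow> (int \<Rightarrow> nat) \<Rightarrow> int \<Rightarrow> int \<Rightarrow> bool" where
  "zero_blocks_ge T w lo hi \<longleftrightarrow>
     (\<forall>i j. lo \<le> i \<and> i \<le> j \<and> j < hi
        \<and> (\<forall>k. i \<le> k \<and> k \<le> j \<longrightarrow> w k = 0)
        \<and> (i = lo \<or> w (i - 1) \<noteq> 0)
        \<and> (j = hi - 1 \<or> w (j + 1) \<noteq> 0)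
        \<longrightarrow> j - i + 1 \<ge> int T)"

definition mild_skew :: "real \<Rightarrow> (real \<Rightarrow> real) \<Rightarrow> real \<Rightarrow> real \<Rightarrow> real
    \<Rightarrow> ((int \<Rightarrow> nat) \<Rightarrow> real \<Rightarrow> real) \<Rightarrow> bool" where
  "mild_skew b g1 \<delta> C \<alpha> f \<longleftrightarrow>
     (\<forall>\<omega>\<in>Sigma2. circle_diffeo (f \<omega>)
        \<and> C1_close \<delta> (f \<omega>) (if \<omega> 0 = 0 then (\<lambda>x. x + b) else g1))
   \<and> (\<exists>L < 2 powr \<alpha>. \<forall>\<omega>\<in>Sigma2. \<forall>\<phi>.
        \<bar>deriv (f \<omega>) \<phi>\<bar> \<le> L \<and> \<bar>deriv (inv (f \<omega>)) \<phi>\<bar> \<le> L)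
   \<and> (\<forall>\<omega>\<in>Sigma2. \<forall>\<omega>'\<in>Sigma2. \<forall>x.
        circ_dist (f \<omega> x) (f \<omega>' x) \<le> C * dSigma \<omega> \<omega>' powr \<alpha>)"

end

theory Submission
  imports Defs
begin

lemma cd_le: "circ_dist x y \<le> \<bar>x - y - of_int k\<bar>"
proof -
  define d where "d = x - y"
  have fr: "frac d = d - of_int \<lfloor>d\<rfloor>" by (simp add: frac_def)
  have f0: "0 \<le> frac d" "frac d < 1" by (auto simp: frac_lt_1)
  define m where "m = k - \<lfloor>d\<rfloor>"
  have e: "\<bar>d - of_int k\<bar> = \<bar>frac d - of_int m\<bar>" by (simp add: fr m_def)
  show ?thesis
  proof (cases "m \<le> 0")
    case True
    then have "frac d \<le> \<bar>frac d - of_int m\<bar>" using f0 by simp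
    then show ?thesis unfolding circ_dist_def d_def[symmetric] e[symmetric] by simp
  next
    case False
    then have "m \<ge> 1" by simp
    then have "1 - frac d \<le> \<bar>frac d - of_int m\<bar>" using f0 by (simp add: abs_if)
    then show ?thesis unfolding circ_dist_def d_def[symmetric] e[symmetric] by simp
  qed
qed

lemma cd_ex: "\<exists>k::int. circ_dist x y = \<bar>x - y - of_int k\<bar>"
proof -
  define d where "d = x - y"
  have fr: "frac d = d - of_int \<lfloor>d\<rfloor>" by (simp add: frac_def)
  have f0: "0 \<le> frac d" "frac d < 1" by (auto simp: frac_lt_1)
  show ?thesis
  proof (cases "frac d \<le> 1 - frac d")
    case True
    then have "circ_dist x y = \<bar>d - of_int \<lfloor>d\<rfloor>\<bar>" using f0 fr by (simp add: circ_dist_def d_def[symmetric])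
    then show ?thesis unfolding d_def by blast
  next
    case False
    then have "circ_dist x y = \<bar>d - of_int (\<lfloor>d\<rfloor>+1)\<bar>" using f0 fr by (simp add: circ_dist_def d_def[symmetric])
    then show ?thesis unfolding d_def by blast
  qed
qed

lemma cd_nonneg: "0 \<le> circ_dist x y"
  by (simp add: circ_dist_def frac_lt_1 less_imp_le)

lemma cd_le_half: "circ_dist x y \<le> 1/2"
  unfolding circ_dist_def by linarith

lemma cd_le_abs: "circ_dist x y \<le> \<bar>x - y\<bar>"
  using cd_le[of x y 0] by simp

lemma cd_sym: "circ_dist x y = circ_dist y x"
proof -
  have *: "circ_dist x y \<le> circ_dist y x" for x y
  proof -
    obtain k where "circ_dist y x = \<bar>y - x - of_int k\<bar>" using cd_ex by blast
    moreover have "circ_dist x y \<le> \<bar>x - y - of_int (-k)\<bar>" by (rule cd_le)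
    ultimately show ?thesis by simp
  qed
  show ?thesis using *[of x y] *[of y x] by simp
qed

lemma cd_triangle: "circ_dist x z \<le> circ_dist x y + circ_dist y z"
proof -
  obtain k where k: "circ_dist x y = \<bar>x - y - of_int k\<bar>" using cd_ex by blast
  obtain l where l: "circ_dist y z = \<bar>y - z - of_int l\<bar>" using cd_ex by blast
  have "circ_dist x z \<le> \<bar>x - z - of_int (k + l)\<bar>" by (rule cd_le)
  also have "\<dots> \<le> \<bar>x - y - of_int k\<bar> + \<bar>y - z - of_int l\<bar>" by simp
  finally show ?thesis using k l by simp
qed

lemma cd_eq_abs: "\<bar>x - y\<bar> \<le> 1/2 \<Longrightarrow> circ_dist x y = \<bar>x - y\<bar>"
proof -
  assume h: "\<bar>x - y\<bar> \<le> 1/2"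
  obtain k where k: "circ_dist x y = \<bar>x - y - of_int k\<bar>" using cd_ex by blast
  have "\<bar>x - y\<bar> \<le> \<bar>x - y - of_int k\<bar>"
  proof (cases "k = 0")
    case False
    then have "\<bar>of_int k::real\<bar> \<ge> 1" by (metis abs_ge_zero add_0 int_less_real_le not_le of_int_0 of_int_abs zero_less_abs_iff)
    then show ?thesis using h by linarith
  qed simp
  then show ?thesis using k cd_le_abs[of x y] by linarith
qed

lemma cd_shift_int: "circ_dist (x + of_int k) y = circ_dist x y"
proof -
  have a: "circ_dist (x + of_int k) y \<le> circ_dist x y"
  proof -
    obtain l where "circ_dist x y = \<bar>x - y - of_int l\<bar>" using cd_ex by blast
    moreover have "circ_dist (x + of_int k) y \<le> \<bar>x + of_int k - y - of_int (l + k)\<bar>" by (rule cd_le)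
    ultimately show ?thesis by simp
  qed
  have b: "circ_dist x y \<le> circ_dist (x + of_int k) y"
  proof -
    obtain l where "circ_dist (x + of_int k) y = \<bar>x + of_int k - y - of_int l\<bar>" using cd_ex by blast
    moreover have "circ_dist x y \<le> \<bar>x - y - of_int (l - k)\<bar>" by (rule cd_le)
    ultimately show ?thesis by simp
  qed
  from a b show ?thesis by simp
qed

lemma cd_translate: "circ_dist (x + c) (y + c) = circ_dist x y"
  by (simp add: circ_dist_def)

lemma cd_self: "circ_dist x x = 0"
  by (simp add: circ_dist_def)

lemma cd_pos: "frac x \<noteq> frac y \<Longrightarrow> 0 < circ_dist x y"
proof (rule ccontr)
  assume h: "frac x \<noteq> frac y" "\<not> 0 < circ_dist x y"
  then have "circ_dist x y = 0" using cd_nonneg[of x y] by simp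
  then obtain k where "\<bar>x - y - of_int k\<bar> = 0" using cd_ex by metis
  then have "x = y + of_int k" by simp
  then have "frac x = frac y" by (simp add: frac_def)
  then show False using h by simp
qed

lemma cd_near: "circ_dist x c < r \<Longrightarrow> \<exists>k::int. \<bar>x - of_int k - c\<bar> < r"
proof -
  assume "circ_dist x c < r"
  moreover obtain k where "circ_dist x c = \<bar>x - c - of_int k\<bar>" using cd_ex by blast
  ultimately show ?thesis by (intro exI[of _ k]) (simp add: algebra_simps)
qed

lemma mvt_bounds:
  fixes F D :: "real \<Rightarrow> real"
  assumes der: "\<And>z. (F has_real_derivative D z) (at z)" and xy: "x \<le> y"
    and bd: "\<And>z. x \<le> z \<Longrightarrow> z \<le> y \<Longrightarrow> l \<le> D z \<and> D z \<le> u"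
  shows "l * (y - x) \<le> F y - F x \<and> F y - F x \<le> u * (y - x)"
proof (cases "x = y")
  case True then show ?thesis by simp
next
  case False
  then have "x < y" using xy by simp
  then obtain z where z: "x < z" "z < y" "F y - F x = (y - x) * D z"
    using MVT2[of x y F D] der by blast
  have "l \<le> D z" "D z \<le> u" using bd z by auto
  moreover have "y - x > 0" using \<open>x < y\<close> by simp
  ultimately show ?thesis using z(3) by (simp add: mult.commute mult_right_mono)
qed

definition lift :: "(real \<Rightarrow> real) \<Rightarrow> bool" where
  "lift F \<longleftrightarrow> (\<forall>x. F (x + 1) = F x + 1)"

lemma lift_int: assumes "lift F" shows "F (x + of_int k) = F x + of_int k"
proof -
  have pos: "F (x + of_nat m) = F x + of_nat m" for x m
  proof (induction m arbitrary: x)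
    case 0 then show ?case by simp
  next
    case (Suc m)
    have "F (x + of_nat (Suc m)) = F ((x + of_nat m) + 1)" by (simp add: algebra_simps)
    also have "\<dots> = F (x + of_nat m) + 1" using assms by (simp add: lift_def)
    finally show ?case using Suc by simp
  qed
  show ?thesis
  proof (cases "k \<ge> 0")
    case True
    then obtain m where "k = int m" by (metis nonneg_eq_int)
    then show ?thesis using pos by simp
  next
    case False
    then obtain m where m: "k = - int m" by (intro that[of "nat (-k)"]) simp
    have "F x = F ((x + of_int k) + of_nat m)" using m by simp
    also have "\<dots> = F (x + of_int k) + of_nat m" by (rule pos)
    finally show ?thesis using m by simp
  qed
qed

lemma lift_lip:
  assumes "lift F" and der: "\<And>z. (F has_real_derivative D z) (at z)"
    and bd: "\<And>z. l \<le> D z \<and> D z \<le> u" and l0: "0 \<le> l"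
  shows "circ_dist (F x) (F y) \<le> u * circ_dist x y"
    and "l * circ_dist x y \<le> circ_dist (F x) (F y)"
proof -
  have u0: "0 \<le> u" using bd[of 0] l0 by linarith
  have gen: "l * \<bar>y - x\<bar> \<le> \<bar>F y - F x\<bar> \<and> \<bar>F y - F x\<bar> \<le> u * \<bar>y - x\<bar>" for x y
  proof (cases "x \<le> y")
    case True
    from mvt_bounds[OF der True, of l u] bd have "l * (y - x) \<le> F y - F x \<and> F y - F x \<le> u * (y - x)" by blast
    moreover have "0 \<le> l * (y - x)" using True l0 by simp
    ultimately show ?thesis using True by (simp add: abs_of_nonneg)
  next
    case False
    then have "y \<le> x" by simp
    from mvt_bounds[OF der this, of l u] bd have "l * (x - y) \<le> F x - F y \<and> F x - F y \<le> u * (x - y)" by blast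
    moreover have "0 \<le> l * (x - y)" using \<open>y \<le> x\<close> l0 by simp
    ultimately show ?thesis using \<open>y \<le> x\<close> by (simp add: abs_of_nonneg abs_minus_commute)
  qed
  obtain k where k: "circ_dist x y = \<bar>x - y - of_int k\<bar>" using cd_ex by blast
  have "circ_dist (F x) (F y) \<le> \<bar>F x - F y - of_int k\<bar>" by (rule cd_le)
  also have "\<dots> = \<bar>F x - F (y + of_int k)\<bar>" using lift_int[OF assms(1)] by simp
  also have "\<dots> \<le> u * \<bar>x - (y + of_int k)\<bar>" using gen[of "y + of_int k" x] by (simp add: abs_minus_commute)
  finally show "circ_dist (F x) (F y) \<le> u * circ_dist x y" using k by (simp add: algebra_simps)
  obtain j where j: "circ_dist (F x) (F y) = \<bar>F x - F y - of_int j\<bar>" using cd_ex by blast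
  have "l * circ_dist x y \<le> l * \<bar>x - y - of_int j\<bar>" using cd_le[of x y j] l0 by (simp add: mult_left_mono)
  also have "\<dots> \<le> \<bar>F x - F (y + of_int j)\<bar>" using gen[of "y + of_int j" x] by (simp add: abs_minus_commute algebra_simps)
  also have "\<dots> = circ_dist (F x) (F y)" using j lift_int[OF assms(1)] by simp
  finally show "l * circ_dist x y \<le> circ_dist (F x) (F y)" .
qed

lemma cdiff_lift: "circle_diffeo F \<Longrightarrow> lift F"
  by (simp add: circle_diffeo_def lift_def)

lemma cdiff_der: "circle_diffeo F \<Longrightarrow> (F has_real_derivative deriv F x) (at x)"
  by (simp add: circle_diffeo_def)

lemma cdiff_cont: "circle_diffeo F \<Longrightarrow> continuous_on S F"
  by (meson DERIV_isCont cdiff_der continuous_at_imp_continuous_on)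

lemma cdiff_strict_mono: assumes "circle_diffeo F" shows "strict_mono F"
proof (rule strict_monoI)
  fix x y :: real assume xy: "x < y"
  have "\<exists>y. DERIV F z :> y \<and> y > 0" for z
    using assms by (auto simp: circle_diffeo_def)
  then show "F x < F y" using DERIV_pos_imp_increasing[OF xy] by blast
qed

lemma cdiff_surj: assumes "circle_diffeo F" shows "surj F"
proof -
  have L: "lift F" using assms by (rule cdiff_lift)
  have "\<exists>x. F x = y" for y
  proof -
    define k where "k = \<lfloor>y - F 0\<rfloor>"
    have k1: "of_int k \<le> y - F 0" "y - F 0 < of_int k + 1" unfolding k_def
      using of_int_floor_le real_of_int_floor_add_one_gt by blast+
    have e1: "F (of_int k) = F 0 + of_int k" using lift_int[OF L, of 0 k] by simp
    have e2: "F (of_int k + 1) = F 0 + of_int k + 1" using lift_int[OF L, of 0 "k+1"] by simp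
    have a: "F (of_int k) \<le> y" using e1 k1 by linarith
    have b: "y \<le> F (of_int k + 1)" using e2 k1 by linarith
    show ?thesis using IVT'[of F "of_int k" y "of_int k + 1"] a b cdiff_cont[OF assms] by auto
  qed
  then show ?thesis by (metis surjI)
qed

lemma cdiff_bij: "circle_diffeo F \<Longrightarrow> bij F"
  by (simp add: bij_def cdiff_surj strict_mono_imp_inj_on cdiff_strict_mono)

lemma cdiff_inv1: "circle_diffeo F \<Longrightarrow> inv F (F x) = x"
  by (simp add: cdiff_bij bij_is_inj inv_f_f)

lemma cdiff_inv2: "circle_diffeo F \<Longrightarrow> F (inv F y) = y"
  by (simp add: cdiff_surj surj_f_inv_f)

lemma cdiff_deriv_periodic: assumes "circle_diffeo F" shows "deriv F (x + of_int k) = deriv F x"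
proof -
  have L: "lift F" using assms by (rule cdiff_lift)
  have "((\<lambda>t. F (t + of_int k)) has_real_derivative deriv F (x + of_int k)) (at x)"
    using cdiff_der[OF assms, of "x + of_int k"] DERIV_shift by blast
  moreover have "(\<lambda>t. F (t + of_int k)) = (\<lambda>t. F t + of_int k)" using lift_int[OF L] by auto
  moreover have "((\<lambda>t. F t + of_int k) has_real_derivative deriv F x) (at x)"
    using cdiff_der[OF assms, of x] by (auto intro!: derivative_eq_intros)
  ultimately show ?thesis using DERIV_unique by metis
qed

lemma cdiff_deriv_bounds: assumes "circle_diffeo F"
  shows "\<exists>m M. 0 < m \<and> (\<forall>x. m \<le> deriv F x \<and> deriv F x \<le> M)"
proof -
  have c: "continuous_on {0..1} (deriv F)" using assms by (auto simp: circle_diffeo_def intro: continuous_on_subset)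
  obtain x0 where x0: "x0 \<in> {0..1}" "\<forall>x\<in>{0..1}. deriv F x0 \<le> deriv F x"
    using continuous_attains_inf[OF compact_Icc _ c] by auto
  obtain x1 where x1: "x1 \<in> {0..1}" "\<forall>x\<in>{0..1}. deriv F x \<le> deriv F x1"
    using continuous_attains_sup[OF compact_Icc _ c] by auto
  have "deriv F x0 \<le> deriv F x \<and> deriv F x \<le> deriv F x1" for x
  proof -
    define k where "k = \<lfloor>x\<rfloor>"
    have k1: "of_int k \<le> x" "x < of_int k + 1" unfolding k_def
      using of_int_floor_le real_of_int_floor_add_one_gt by blast+
    have "x - of_int k \<in> {0..1}" using k1 by simp
    moreover have "deriv F x = deriv F (x - of_int k)" using cdiff_deriv_periodic[OF assms, of "x - of_int k" k] by simp
    ultimately show ?thesis using x0 x1 by auto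
  qed
  moreover have "0 < deriv F x0" using assms by (simp add: circle_diffeo_def)
  ultimately show ?thesis by blast
qed


fun cmp :: "((int\<Rightarrow>nat) \<Rightarrow> nat \<Rightarrow> real \<Rightarrow> real) \<Rightarrow> (int\<Rightarrow>nat) \<Rightarrow> real \<Rightarrow> nat \<Rightarrow> real" where
  "cmp H \<omega> x 0 = x"
| "cmp H \<omega> x (Suc t) = H \<omega> t (cmp H \<omega> x t)"

lemma rec_unroll:
  fixes W d :: "nat \<Rightarrow> real"
  assumes "\<And>j. j < N \<Longrightarrow> W (Suc j) \<le> c * W j + d j" and "0 \<le> c"
  shows "W N \<le> c ^ N * W 0 + (\<Sum>j<N. c ^ (N - 1 - j) * d j)"
  using assms(1)
proof (induction N)
  case 0 then show ?case by simp
next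
  case (Suc N)
  have IH: "W N \<le> c ^ N * W 0 + (\<Sum>j<N. c ^ (N - 1 - j) * d j)" using Suc by simp
  have "W (Suc N) \<le> c * W N + d N" using Suc by simp
  also have "\<dots> \<le> c * (c ^ N * W 0 + (\<Sum>j<N. c ^ (N - 1 - j) * d j)) + d N"
    using IH assms(2) by (simp add: mult_left_mono)
  also have "\<dots> = c ^ Suc N * W 0 + ((\<Sum>j<N. c ^ (Suc N - 1 - j) * d j) + d N)"
  proof -
    have "c * (\<Sum>j<N. c ^ (N - 1 - j) * d j) = (\<Sum>j<N. c ^ (Suc N - 1 - j) * d j)"
      unfolding sum_distrib_left
    proof (rule sum.cong)
      fix j assume "j \<in> {..<N}"
      then have "Suc N - 1 - j = Suc (N - 1 - j)" by auto
      then show "c * (c ^ (N - 1 - j) * d j) = c ^ (Suc N - 1 - j) * d j" by simp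
    qed simp
    then show ?thesis by (simp add: algebra_simps)
  qed
  also have "\<dots> = c ^ Suc N * W 0 + (\<Sum>j<Suc N. c ^ (Suc N - 1 - j) * d j)" by simp
  finally show ?case .
qed

lemma geo_half: "(\<Sum>j<M. (1/2::real) ^ (M + I - j)) \<le> (1/2) ^ I"
proof (induction M)
  case 0 then show ?case by simp
next
  case (Suc M)
  have "(\<Sum>j<Suc M. (1/2::real) ^ (Suc M + I - j)) = (\<Sum>j<M. (1/2::real) ^ (Suc M + I - j)) + (1/2) ^ Suc I"
    by simp
  also have "(\<Sum>j<M. (1/2::real) ^ (Suc M + I - j)) = (1/2) * (\<Sum>j<M. (1/2::real) ^ (M + I - j))"
    unfolding sum_distrib_left
  proof (rule sum.cong)
    fix j assume "j \<in> {..<M}"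
    then have "Suc M + I - j = Suc (M + I - j)" by auto
    then show "(1/2::real) ^ (Suc M + I - j) = 1/2 * (1/2) ^ (M + I - j)" by simp
  qed simp
  finally show ?case using Suc by simp
qed

lemma split_sum_bound:
  fixes x :: "nat \<Rightarrow> real"
  assumes A0: "0 \<le> A" and B0: "0 \<le> B"
    and h1: "\<And>j. j < N \<Longrightarrow> N - I \<le> j \<Longrightarrow> x j \<le> A"
    and h2: "\<And>j. j < N - I \<Longrightarrow> x j \<le> B * (1/2) ^ (N - j)"
  shows "(\<Sum>j<N. x j) \<le> real I * A + B * (1/2) ^ I"
proof -
  define M where "M = N - I"
  have MN: "M \<le> N" by (simp add: M_def)
  have split: "(\<Sum>j<N. x j) = (\<Sum>j\<in>{0..<M}. x j) + (\<Sum>j\<in>{M..<N}. x j)"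
    using sum.atLeastLessThan_concat[OF _ MN, of 0 x] by (simp add: atLeast0LessThan)
  have s2: "(\<Sum>j\<in>{M..<N}. x j) \<le> real I * A"
  proof -
    have "(\<Sum>j\<in>{M..<N}. x j) \<le> of_nat (card {M..<N}) * A"
      by (rule sum_bounded_above) (use h1 in \<open>auto simp: M_def\<close>)
    also have "\<dots> \<le> real I * A" using A0 by (intro mult_right_mono) (auto simp: M_def)
    finally show ?thesis .
  qed
  have s1: "(\<Sum>j\<in>{0..<M}. x j) \<le> B * (1/2) ^ I"
  proof (cases "I \<le> N")
    case True
    have "(\<Sum>j\<in>{0..<M}. x j) \<le> (\<Sum>j<M. B * (1/2) ^ (M + I - j))"
      unfolding atLeast0LessThan
    proof (rule sum_mono)
      fix j assume "j \<in> {..<M}"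
      then have "j < N - I" "N - j = M + I - j" using True by (auto simp: M_def)
      then show "x j \<le> B * (1/2) ^ (M + I - j)" using h2 by metis
    qed
    also have "\<dots> = B * (\<Sum>j<M. (1/2) ^ (M + I - j))" by (simp add: sum_distrib_left)
    also have "\<dots> \<le> B * (1/2) ^ I" using geo_half B0 by (intro mult_left_mono) auto
    finally show ?thesis .
  next
    case False
    then have "M = 0" by (simp add: M_def)
    then show ?thesis using B0 by simp
  qed
  show ?thesis using split s1 s2 by linarith
qed

lemma pow_shift_eq:
  fixes r :: real assumes "r > 0"
  shows "r ^ Suc k * (1 / r ^ 2) ^ k = r ^ 2 * (1 / r) ^ Suc k"
proof -
  have a: "r ^ k * (1 / r) ^ k = 1" using assms by (simp add: power_one_over)
  have "(1 / r ^ 2) ^ k = ((1 / r) ^ k) * ((1 / r) ^ k)"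
    by (simp add: power_one_over power_mult[symmetric] power2_eq_square power_mult_distrib mult.commute)
  then have "r ^ Suc k * (1 / r ^ 2) ^ k = r * (r ^ k * (1 / r) ^ k) * (1 / r) ^ k" by (simp add: algebra_simps)
  also have "\<dots> = r * (1 / r) ^ k" using a by simp
  also have "\<dots> = r ^ 2 * (1 / r) ^ Suc k" using assms by (simp add: power2_eq_square)
  finally show ?thesis .
qed

lemma width_num:
  fixes \<Gamma> r G D1 D2 \<delta> kP :: real and n N P I :: nat
  assumes r2: "2 \<le> r" and Gam: "0 \<le> \<Gamma>" "\<Gamma> \<le> r" and kP: "0 \<le> kP" "kP \<le> 1 / r ^ 2"
    and G0: "0 \<le> G" and D: "0 \<le> D1" "0 \<le> D2" "0 \<le> \<delta>"
  shows "\<Gamma> ^ N * (G ^ n * (real n * (D2 * kP ^ N)))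
     + (\<Sum>j<N. \<Gamma> ^ (N - 1 - j) * (\<Gamma> * (real P * min (D1 * \<delta>) (D2 * kP ^ (N - 1 - j)))))
     \<le> G ^ n * real n * D2 * (1 / r) ^ N + (real I * (r ^ I * (real P * (D1 * \<delta>))) + (real P * D2 * r ^ 2) * (1/2) ^ I)"
proof -
  have r0: "0 < r" using r2 by simp
  have t1: "\<Gamma> ^ N * (G ^ n * (real n * (D2 * kP ^ N))) \<le> G ^ n * real n * D2 * (1 / r) ^ N"
  proof -
    have "\<Gamma> ^ N * kP ^ N \<le> r ^ N * (1 / r ^ 2) ^ N"
      using Gam kP by (intro mult_mono power_mono) auto
    also have "\<dots> = (r * (1 / r ^ 2)) ^ N" by (rule power_mult_distrib[symmetric])
    also have "r * (1 / r ^ 2) = 1 / r" using r0 by (simp add: power2_eq_square)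
    finally have "\<Gamma> ^ N * kP ^ N \<le> (1 / r) ^ N" by simp
    then have "(G ^ n * real n * D2) * (\<Gamma> ^ N * kP ^ N) \<le> (G ^ n * real n * D2) * (1 / r) ^ N"
      using G0 D by (intro mult_left_mono) auto
    then show ?thesis by (simp add: algebra_simps)
  qed
  have t2: "(\<Sum>j<N. \<Gamma> ^ (N - 1 - j) * (\<Gamma> * (real P * min (D1 * \<delta>) (D2 * kP ^ (N - 1 - j)))))
      \<le> real I * (r ^ I * (real P * (D1 * \<delta>))) + (real P * D2 * r ^ 2) * (1/2) ^ I"
  proof (rule split_sum_bound)
    show "0 \<le> r ^ I * (real P * (D1 * \<delta>))" using r0 D by simp
    show "0 \<le> real P * D2 * r ^ 2" using D by simp
  next
    fix j assume j: "j < N" "N - I \<le> j"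
    have nj: "N - j = Suc (N - 1 - j)" using j(1) by simp
    have e: "\<Gamma> ^ (N - 1 - j) * \<Gamma> = \<Gamma> ^ (N - j)" unfolding nj by (simp add: power_Suc2)
    have "\<Gamma> ^ (N - j) \<le> r ^ (N - j)" using Gam by (intro power_mono) auto
    also have "\<dots> \<le> r ^ I" using r2 j by (intro power_increasing) auto
    finally have g: "\<Gamma> ^ (N - j) \<le> r ^ I" .
    have m: "0 \<le> real P * min (D1 * \<delta>) (D2 * kP ^ (N - 1 - j))" using D kP by simp
    have "\<Gamma> ^ (N - 1 - j) * (\<Gamma> * (real P * min (D1 * \<delta>) (D2 * kP ^ (N - 1 - j))))
        = \<Gamma> ^ (N - j) * (real P * min (D1 * \<delta>) (D2 * kP ^ (N - 1 - j)))" using e by (simp add: mult.assoc[symmetric])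
    also have "\<dots> \<le> r ^ I * (real P * min (D1 * \<delta>) (D2 * kP ^ (N - 1 - j)))" using g m by (intro mult_right_mono)
    also have "\<dots> \<le> r ^ I * (real P * (D1 * \<delta>))" using r0 by (intro mult_left_mono) (auto intro: mult_left_mono)
    finally show "\<Gamma> ^ (N - 1 - j) * (\<Gamma> * (real P * min (D1 * \<delta>) (D2 * kP ^ (N - 1 - j)))) \<le> r ^ I * (real P * (D1 * \<delta>))" .
  next
    fix j assume j: "j < N - I"
    then have jN: "j < N" by simp
    define k where "k = N - 1 - j"
    have k: "N - j = Suc k" "N - 1 - j = k" using jN by (simp_all add: k_def)
    have e: "\<Gamma> ^ (N - 1 - j) * \<Gamma> = \<Gamma> ^ Suc k" using k by (simp add: mult.commute)
    have "\<Gamma> ^ (N - 1 - j) * (\<Gamma> * (real P * min (D1 * \<delta>) (D2 * kP ^ (N - 1 - j))))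
        = \<Gamma> ^ Suc k * (real P * min (D1 * \<delta>) (D2 * kP ^ k))"
      using e k by (simp add: mult.assoc[symmetric])
    also have "\<dots> \<le> \<Gamma> ^ Suc k * (real P * (D2 * kP ^ k))"
      using Gam by (intro mult_left_mono) auto
    also have "\<dots> \<le> r ^ Suc k * (real P * (D2 * (1 / r ^ 2) ^ k))"
      using Gam kP D by (intro mult_mono power_mono) auto
    also have "\<dots> = (real P * D2) * (r ^ Suc k * (1 / r ^ 2) ^ k)" by (simp add: algebra_simps)
    also have "\<dots> = (real P * D2 * r ^ 2) * (1 / r) ^ Suc k" using pow_shift_eq[OF r0, of k] by simp
    also have "\<dots> \<le> (real P * D2 * r ^ 2) * (1 / 2) ^ Suc k"
      using D r2 by (intro mult_left_mono power_mono) (auto simp: field_simps)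
    finally show "\<Gamma> ^ (N - 1 - j) * (\<Gamma> * (real P * min (D1 * \<delta>) (D2 * kP ^ (N - 1 - j)))) \<le> real P * D2 * r ^ 2 * (1 / 2) ^ (N - j)"
      using k by simp
  qed
  show ?thesis using t1 t2 by linarith
qed

locale side =
  fixes H :: "(int\<Rightarrow>nat) \<Rightarrow> nat \<Rightarrow> real \<Rightarrow> real"
    and pos :: "nat \<Rightarrow> int"
    and G \<rho> e \<delta> \<eta> lam D1 D2 \<kappa> :: real
  assumes G1: "1 \<le> G" and etaG: "1 + \<eta> \<le> G" and eta0: "0 \<le> \<eta>" and eta1: "\<eta> \<le> 1" and del0: "0 \<le> \<delta>"
    and D10: "0 \<le> D1" and D20: "0 \<le> D2" and kap0: "0 \<le> \<kappa>" and kap1: "\<kappa> \<le> 1"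
    and Hlip: "\<omega> \<in> Sigma2 \<Longrightarrow> circ_dist (H \<omega> s x) (H \<omega> s y) \<le> G * circ_dist x y"
    and Hcolip: "\<omega> \<in> Sigma2 \<Longrightarrow> circ_dist x y \<le> G * circ_dist (H \<omega> s x) (H \<omega> s y)"
    and H0rot: "\<omega> \<in> Sigma2 \<Longrightarrow> \<omega> (pos s) = 0 \<Longrightarrow> circ_dist (H \<omega> s x) (x + \<rho>) \<le> \<delta>"
    and H0lip: "\<omega> \<in> Sigma2 \<Longrightarrow> \<omega> (pos s) = 0 \<Longrightarrow> circ_dist (H \<omega> s x) (H \<omega> s y) \<le> (1+\<eta>) * circ_dist x y"
    and H0colip: "\<omega> \<in> Sigma2 \<Longrightarrow> \<omega> (pos s) = 0 \<Longrightarrow> (1-\<eta>) * circ_dist x y \<le> circ_dist (H \<omega> s x) (H \<omega> s y)"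
    and H1exp: "\<omega> \<in> Sigma2 \<Longrightarrow> \<omega> (pos s) = 1 \<Longrightarrow> circ_dist x e < 3/100 \<Longrightarrow> circ_dist y e < 3/100
        \<Longrightarrow> lam * circ_dist x y \<le> circ_dist (H \<omega> s x) (H \<omega> s y)"
    and Hclose: "\<omega> \<in> Sigma2 \<Longrightarrow> \<omega>' \<in> Sigma2 \<Longrightarrow> \<omega> (pos s) = \<omega>' (pos s)
        \<Longrightarrow> circ_dist (H \<omega> s z) (H \<omega>' s z) \<le> D1 * \<delta>"
    and Hhold: "\<omega> \<in> Sigma2 \<Longrightarrow> \<omega>' \<in> Sigma2 \<Longrightarrow> (\<forall>i. - int t \<le> i \<and> i < int t \<longrightarrow> \<omega> i = \<omega>' i)
        \<Longrightarrow> s < t \<Longrightarrow> circ_dist (H \<omega> s z) (H \<omega>' s z) \<le> D2 * \<kappa> ^ (t - Suc s)"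
    and pos_rng: "s < t \<Longrightarrow> - int t \<le> pos s \<and> pos s < int t"
begin

abbreviation X where "X \<omega> x t \<equiv> cmp H \<omega> x t"

lemma step_bound:
  assumes "\<omega> \<in> Sigma2" "\<omega>' \<in> Sigma2" and l: "\<And>x y. circ_dist (H \<omega>' s x) (H \<omega>' s y) \<le> l * circ_dist x y"
  shows "circ_dist (X \<omega> x (Suc s)) (X \<omega>' x (Suc s)) \<le>
     circ_dist (H \<omega> s (X \<omega> x s)) (H \<omega>' s (X \<omega> x s)) + l * circ_dist (X \<omega> x s) (X \<omega>' x s)"
proof -
  have "circ_dist (X \<omega> x (Suc s)) (X \<omega>' x (Suc s)) \<le>
      circ_dist (H \<omega> s (X \<omega> x s)) (H \<omega>' s (X \<omega> x s)) + circ_dist (H \<omega>' s (X \<omega> x s)) (H \<omega>' s (X \<omega>' x s))"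
    by (simp add: cd_triangle)
  then show ?thesis using l[of "X \<omega> x s" "X \<omega>' x s"] by linarith
qed

lemma cyl_sigma: "\<omega> \<in> cylinder t \<beta> \<Longrightarrow> \<omega> \<in> Sigma2"
  by (simp add: cylinder_def)

lemma cyl_agree: "\<omega> \<in> cylinder t \<beta> \<Longrightarrow> \<omega>' \<in> cylinder t \<beta> \<Longrightarrow> - int t \<le> i \<Longrightarrow> i < int t \<Longrightarrow> \<omega> i = \<omega>' i"
  by (simp add: cylinder_def)

lemma e_bound:
  assumes "\<omega> \<in> cylinder t \<beta>" "\<omega>' \<in> cylinder t \<beta>" "s < t"
  shows "circ_dist (H \<omega> s z) (H \<omega>' s z) \<le> D1 * \<delta>"
    and "circ_dist (H \<omega> s z) (H \<omega>' s z) \<le> D2 * \<kappa> ^ (t - Suc s)"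
proof -
  have s: "\<omega> \<in> Sigma2" "\<omega>' \<in> Sigma2" using assms cyl_sigma by auto
  have "\<omega> (pos s) = \<omega>' (pos s)" using pos_rng[OF assms(3)] cyl_agree[OF assms(1,2)] by blast
  then show "circ_dist (H \<omega> s z) (H \<omega>' s z) \<le> D1 * \<delta>" using Hclose s by blast
  show "circ_dist (H \<omega> s z) (H \<omega>' s z) \<le> D2 * \<kappa> ^ (t - Suc s)"
    using Hhold[OF s _ assms(3)] cyl_agree[OF assms(1,2)] by blast
qed

lemma lip_sym:
  assumes "\<omega> \<in> Sigma2"
  shows "circ_dist (H \<omega> s x) (H \<omega> s y) \<le> (if \<omega> (pos s) = 0 then 1 + \<eta> else G) * circ_dist x y"
  using H0lip[OF assms] Hlip[OF assms] by auto

lemma width: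
  fixes n P N :: nat and pf :: "nat \<Rightarrow> nat option"
  defines "t \<equiv> n + N * P"
  defines "\<Gamma> \<equiv> G * (1 + \<eta>) ^ P"
  assumes om: "\<omega> \<in> cylinder t \<beta>" "\<omega>' \<in> cylinder t \<beta>"
    and fmt: "\<And>j i. j < N \<Longrightarrow> i < P \<Longrightarrow> \<beta> (pos (n + j * P + i)) = (if pf j = Some i then 1 else 0)"
  shows "circ_dist (X \<omega> \<phi> t) (X \<omega>' \<phi> t) \<le> \<Gamma> ^ N * (G ^ n * (real n * (D2 * \<kappa> ^ (N * P))))
     + (\<Sum>j<N. \<Gamma> ^ (N - 1 - j) * (\<Gamma> * (real P * min (D1 * \<delta>) (D2 * (\<kappa> ^ P) ^ (N - 1 - j)))))"
proof -
  define D where "D s = circ_dist (X \<omega> \<phi> s) (X \<omega>' \<phi> s)" for s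
  have sig: "\<omega> \<in> Sigma2" "\<omega>' \<in> Sigma2" using om cyl_sigma by auto
  have sym: "\<omega>' (pos s) = \<beta> (pos s)" if "s < t" for s
    using om(2) pos_rng[OF that] by (simp add: cylinder_def)
  have stepD: "D (Suc s) \<le> circ_dist (H \<omega> s (X \<omega> \<phi> s)) (H \<omega>' s (X \<omega> \<phi> s)) + (if \<omega>' (pos s) = 0 then 1 + \<eta> else G) * D s" for s
    unfolding D_def by (rule step_bound[OF sig lip_sym[OF sig(2)]])
  have Dnn: "0 \<le> D s" for s by (simp add: D_def cd_nonneg)
  have G0: "0 \<le> G" using G1 by simp
  define E0 where "E0 = D2 * \<kappa> ^ (N * P)"
  have E0nn: "0 \<le> E0" using D20 kap0 by (simp add: E0_def)
  have pre: "s \<le> n \<Longrightarrow> D s \<le> G ^ s * (real s * E0)" for s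
  proof (induction s)
    case 0 then show ?case by (simp add: D_def cd_self)
  next
    case (Suc s)
    have st: "Suc s \<le> t" using Suc.prems by (simp add: t_def)
    have e: "circ_dist (H \<omega> s (X \<omega> \<phi> s)) (H \<omega>' s (X \<omega> \<phi> s)) \<le> E0"
    proof -
      have "circ_dist (H \<omega> s (X \<omega> \<phi> s)) (H \<omega>' s (X \<omega> \<phi> s)) \<le> D2 * \<kappa> ^ (t - Suc s)"
        using e_bound(2)[OF om] st by simp
      also have "\<dots> \<le> D2 * \<kappa> ^ (N * P)"
        using Suc.prems D20 kap0 kap1 by (intro mult_left_mono power_decreasing) (auto simp: t_def)
      finally show ?thesis by (simp add: E0_def)
    qed
    have l: "(if \<omega>' (pos s) = 0 then 1 + \<eta> else G) \<le> G" using etaG by auto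
    have "D (Suc s) \<le> E0 + G * D s"
      using stepD[of s] e l Dnn[of s] by (smt (verit) mult_right_mono)
    also have "\<dots> \<le> E0 + G * (G ^ s * (real s * E0))"
      using Suc G0 by (simp add: mult_left_mono)
    also have "\<dots> \<le> G ^ Suc s * (real (Suc s) * E0)"
    proof -
      have "1 \<le> G ^ Suc s" using G1 by (rule one_le_power)
      then have "E0 \<le> G ^ Suc s * E0" using E0nn by (simp add: mult_le_cancel_right1)
      then show ?thesis by (simp add: algebra_simps)
    qed
    finally show ?case .
  qed
  define W where "W j = D (n + j * P)" for j
  define Ej where "Ej j = min (D1 * \<delta>) (D2 * (\<kappa> ^ P) ^ (N - 1 - j))" for j
  have cyc: "W (Suc j) \<le> \<Gamma> * W j + \<Gamma> * (real P * Ej j)" if jN: "j < N" for j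
  proof -
    define base where "base = n + j * P"
    define c where "c i = (if \<exists>k. pf j = Some k \<and> k < i then G else 1)" for i
    have ebd: "circ_dist (H \<omega> (base + i) z) (H \<omega>' (base + i) z) \<le> Ej j" if "i < P" for i z
    proof -
      have lt: "base + i < t" unfolding base_def t_def
      proof -
        have "j * P + i < j * P + P" using that by simp
        also have "\<dots> = (j + 1) * P" by simp
        also have "\<dots> \<le> N * P" using jN by (intro mult_right_mono) auto
        finally show "n + j * P + i < n + N * P" by simp
      qed
      have a: "circ_dist (H \<omega> (base + i) z) (H \<omega>' (base + i) z) \<le> D1 * \<delta>" using e_bound(1)[OF om lt] .
      have b0: "circ_dist (H \<omega> (base + i) z) (H \<omega>' (base + i) z) \<le> D2 * \<kappa> ^ (t - Suc (base + i))" using e_bound(2)[OF om lt] .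
      have le: "(N - 1 - j) * P \<le> t - Suc (base + i)"
      proof -
        have "base + i + 1 + (N - 1 - j) * P \<le> t" using that jN unfolding base_def t_def
        proof -
          have "j * P + i + 1 + (N - 1 - j) * P \<le> j * P + P + (N - 1 - j) * P" using that by simp
          also have "\<dots> = (j + 1 + (N - 1 - j)) * P" by (simp add: algebra_simps)
          also have "\<dots> = N * P" using jN by simp
          finally show "n + j * P + i + 1 + (N - 1 - j) * P \<le> n + N * P" by simp
        qed
        then show ?thesis by simp
      qed
      have "D2 * \<kappa> ^ (t - Suc (base + i)) \<le> D2 * \<kappa> ^ ((N - 1 - j) * P)"
        using D20 kap0 kap1 le by (intro mult_left_mono power_decreasing) auto
      also have "\<dots> = D2 * (\<kappa> ^ P) ^ (N - 1 - j)" by (simp add: power_mult mult.commute)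
      finally have "circ_dist (H \<omega> (base + i) z) (H \<omega>' (base + i) z) \<le> D2 * (\<kappa> ^ P) ^ (N - 1 - j)" using b0 by linarith
      then show ?thesis using a by (simp add: Ej_def)
    qed
    have Ejnn: "0 \<le> Ej j" using D10 D20 del0 kap0 by (simp add: Ej_def)
    have c1: "1 \<le> c i" "c i \<le> G" for i using G1 by (auto simp: c_def)
    have cmono: "c i \<le> c (Suc i)" for i using G1 by (auto simp: c_def)
    have claim: "i \<le> P \<Longrightarrow> D (base + i) \<le> c i * (1 + \<eta>) ^ i * (W j + real i * Ej j)" for i
    proof (induction i)
      case 0 then show ?case by (simp add: c_def W_def base_def)
    next
      case (Suc i)
      have iP: "i < P" using Suc.prems by simp
      have lt: "base + i < t" using iP jN unfolding base_def t_def
      proof -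
        have "j * P + i < j * P + P" using iP by simp
        also have "\<dots> = (j + 1) * P" by simp
        also have "\<dots> \<le> N * P" using jN by (intro mult_right_mono) auto
        finally show "n + j * P + i < n + N * P" by simp
      qed
      have symv: "\<omega>' (pos (base + i)) = (if pf j = Some i then 1 else 0)"
        using sym[OF lt] fmt[OF jN iP] by (simp add: base_def)
      have IH: "D (base + i) \<le> c i * (1 + \<eta>) ^ i * (W j + real i * Ej j)" using Suc by simp
      have pw: "1 \<le> (1 + \<eta>) ^ i" using eta0 by (simp add: one_le_power)
      have WE: "0 \<le> W j + real i * Ej j" using Dnn Ejnn by (simp add: W_def)
      have stD: "D (Suc (base + i)) \<le> Ej j + (if \<omega>' (pos (base + i)) = 0 then 1 + \<eta> else G) * D (base + i)"
        using stepD[of "base + i"] ebd[OF iP] by smt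
      show ?case
      proof (cases "pf j = Some i")
        case True
        then have ci: "c i = 1" by (auto simp: c_def)
        have cs: "c (Suc i) = G" using True by (auto simp: c_def)
        have "D (base + Suc i) \<le> Ej j + G * D (base + i)"
          using stD symv True by simp
        also have "\<dots> \<le> Ej j + G * ((1 + \<eta>) ^ i * (W j + real i * Ej j))"
          using IH ci G0 by (simp add: mult_left_mono)
        also have "\<dots> \<le> G * (1 + \<eta>) ^ Suc i * (W j + real (Suc i) * Ej j)"
        proof -
          have Q0: "0 \<le> (1 + \<eta>) ^ i * (W j + real i * Ej j)" using WE eta0 by simp
          have "(1 + \<eta>) ^ i * (W j + real i * Ej j) \<le> (1 + \<eta>) * ((1 + \<eta>) ^ i * (W j + real i * Ej j))"
            using Q0 eta0 by (simp add: mult_le_cancel_right1)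
          then have A: "G * ((1 + \<eta>) ^ i * (W j + real i * Ej j)) \<le> G * (1 + \<eta>) ^ Suc i * (W j + real i * Ej j)"
            using G0 by (simp add: mult_left_mono mult.assoc)
          have p1: "1 \<le> (1 + \<eta>) ^ Suc i" by (rule one_le_power) (use eta0 in simp)
          have "1 * 1 \<le> G * (1 + \<eta>) ^ Suc i" by (rule mult_mono) (use G1 p1 in auto)
          then have B: "Ej j \<le> G * (1 + \<eta>) ^ Suc i * Ej j"
            using Ejnn by (simp add: mult_le_cancel_right1)
          show ?thesis using A B by (simp add: algebra_simps)
        qed
        finally show ?thesis using cs by simp
      next
        case False
        then have "\<omega>' (pos (base + i)) = 0" using symv by simp
        then have "D (base + Suc i) \<le> Ej j + (1 + \<eta>) * D (base + i)"
          using stD by simp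
        also have "\<dots> \<le> Ej j + (1 + \<eta>) * (c i * (1 + \<eta>) ^ i * (W j + real i * Ej j))"
          using IH eta0 by (simp add: mult_left_mono)
        also have "\<dots> \<le> c (Suc i) * (1 + \<eta>) ^ Suc i * (W j + real (Suc i) * Ej j)"
        proof -
          have A: "(1 + \<eta>) * (c i * (1 + \<eta>) ^ i * (W j + real i * Ej j)) \<le> c (Suc i) * (1 + \<eta>) ^ Suc i * (W j + real i * Ej j)"
          proof -
            have "(1 + \<eta>) * (c i * (1 + \<eta>) ^ i * (W j + real i * Ej j)) = c i * ((1 + \<eta>) ^ Suc i * (W j + real i * Ej j))"
              by (simp add: algebra_simps)
            also have "\<dots> \<le> c (Suc i) * ((1 + \<eta>) ^ Suc i * (W j + real i * Ej j))"
              using cmono[of i] WE eta0 by (intro mult_right_mono) auto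
            finally show ?thesis by (simp add: algebra_simps)
          qed
          have B: "Ej j \<le> c (Suc i) * (1 + \<eta>) ^ Suc i * Ej j"
          proof -
            have p1: "1 \<le> (1 + \<eta>) ^ Suc i" by (rule one_le_power) (use eta0 in simp)
            have "1 * 1 \<le> c (Suc i) * (1 + \<eta>) ^ Suc i" by (rule mult_mono) (use c1[of "Suc i"] p1 in auto)
            then have "1 \<le> c (Suc i) * (1 + \<eta>) ^ Suc i" by simp
            then show ?thesis using Ejnn by (simp add: mult_le_cancel_right1)
          qed
          show ?thesis using A B by (simp add: algebra_simps)
        qed
        finally show ?thesis by simp
      qed
    qed
    have "W (Suc j) = D (base + P)" by (simp add: W_def base_def algebra_simps)
    also have "\<dots> \<le> c P * (1 + \<eta>) ^ P * (W j + real P * Ej j)" using claim by simp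
    also have "\<dots> \<le> G * (1 + \<eta>) ^ P * (W j + real P * Ej j)"
      using c1[of P] Dnn Ejnn eta0 by (intro mult_right_mono) (auto simp: W_def)
    finally show ?thesis by (simp add: \<Gamma>_def algebra_simps)
  qed
  have Gam0: "0 \<le> \<Gamma>" using G0 eta0 by (simp add: \<Gamma>_def)
  have "W N \<le> \<Gamma> ^ N * W 0 + (\<Sum>j<N. \<Gamma> ^ (N - 1 - j) * (\<Gamma> * (real P * Ej j)))"
    by (rule rec_unroll[OF _ Gam0]) (use cyc in auto)
  moreover have "W 0 \<le> G ^ n * (real n * E0)" using pre[of n] by (simp add: W_def)
  moreover have "0 \<le> \<Gamma> ^ N" using Gam0 by simp
  ultimately have "W N \<le> \<Gamma> ^ N * (G ^ n * (real n * E0)) + (\<Sum>j<N. \<Gamma> ^ (N - 1 - j) * (\<Gamma> * (real P * Ej j)))"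
    by (smt (verit) mult_left_mono)
  then show ?thesis by (simp add: W_def D_def E0_def Ej_def t_def)
qed

lemma zeros_seg_aux:
  assumes om: "\<omega> \<in> Sigma2" and z: "\<And>i. i < L \<Longrightarrow> \<omega> (pos (base + i)) = 0"
  shows "i \<le> L \<Longrightarrow> circ_dist (X \<omega> x (base + i)) (X \<omega> x base + real i * \<rho>) \<le> real i * \<delta>
    \<and> circ_dist (X \<omega> x (base + i)) (X \<omega> y (base + i)) \<le> (1 + \<eta>) ^ i * circ_dist (X \<omega> x base) (X \<omega> y base)
    \<and> (1 - \<eta>) ^ i * circ_dist (X \<omega> x base) (X \<omega> y base) \<le> circ_dist (X \<omega> x (base + i)) (X \<omega> y (base + i))"
proof (induction i)
  case 0 then show ?case by (simp add: cd_self)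
next
  case (Suc i)
  have iL: "i < L" using Suc.prems by simp
  have zz: "\<omega> (pos (base + i)) = 0" using z[OF iL] .
  have IH1: "circ_dist (X \<omega> x (base + i)) (X \<omega> x base + real i * \<rho>) \<le> real i * \<delta>" using Suc.IH iL by simp
  have IH2: "circ_dist (X \<omega> x (base + i)) (X \<omega> y (base + i)) \<le> (1 + \<eta>) ^ i * circ_dist (X \<omega> x base) (X \<omega> y base)" using Suc.IH iL by simp
  have IH3: "(1 - \<eta>) ^ i * circ_dist (X \<omega> x base) (X \<omega> y base) \<le> circ_dist (X \<omega> x (base + i)) (X \<omega> y (base + i))" using Suc.IH iL by simp
  have C1: "circ_dist (X \<omega> x (base + Suc i)) (X \<omega> x base + real (Suc i) * \<rho>) \<le> real (Suc i) * \<delta>"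
  proof -
    have "circ_dist (X \<omega> x (base + Suc i)) (X \<omega> x base + real (Suc i) * \<rho>)
        \<le> circ_dist (H \<omega> (base + i) (X \<omega> x (base + i))) (X \<omega> x (base + i) + \<rho>)
         + circ_dist (X \<omega> x (base + i) + \<rho>) (X \<omega> x base + real (Suc i) * \<rho>)"
      by (simp add: cd_triangle)
    also have "circ_dist (X \<omega> x (base + i) + \<rho>) (X \<omega> x base + real (Suc i) * \<rho>) = circ_dist (X \<omega> x (base + i)) (X \<omega> x base + real i * \<rho>)"
      using cd_translate[of "X \<omega> x (base + i)" \<rho> "X \<omega> x base + real i * \<rho>"] by (simp add: algebra_simps)
    finally show ?thesis using H0rot[OF om zz, of "X \<omega> x (base + i)"] IH1 by (simp add: algebra_simps)
  qed
  have C2: "circ_dist (X \<omega> x (base + Suc i)) (X \<omega> y (base + Suc i)) \<le> (1 + \<eta>) ^ Suc i * circ_dist (X \<omega> x base) (X \<omega> y base)"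
  proof -
    have "circ_dist (X \<omega> x (base + Suc i)) (X \<omega> y (base + Suc i)) \<le> (1 + \<eta>) * circ_dist (X \<omega> x (base + i)) (X \<omega> y (base + i))"
      using H0lip[OF om zz] by simp
    also have "\<dots> \<le> (1 + \<eta>) * ((1 + \<eta>) ^ i * circ_dist (X \<omega> x base) (X \<omega> y base))"
      using IH2 eta0 by (intro mult_left_mono) auto
    finally show ?thesis by simp
  qed
  have C3: "(1 - \<eta>) ^ Suc i * circ_dist (X \<omega> x base) (X \<omega> y base) \<le> circ_dist (X \<omega> x (base + Suc i)) (X \<omega> y (base + Suc i))"
  proof -
    have "(1 - \<eta>) ^ Suc i * circ_dist (X \<omega> x base) (X \<omega> y base) = (1 - \<eta>) * ((1 - \<eta>) ^ i * circ_dist (X \<omega> x base) (X \<omega> y base))" by simp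
    also have "\<dots> \<le> (1 - \<eta>) * circ_dist (X \<omega> x (base + i)) (X \<omega> y (base + i))"
      using IH3 eta1 by (intro mult_left_mono) auto
    also have "\<dots> \<le> circ_dist (X \<omega> x (base + Suc i)) (X \<omega> y (base + Suc i))"
      using H0colip[OF om zz] by simp
    finally show ?thesis .
  qed
  show ?case using C1 C2 C3 by blast
qed

lemma zeros_seg:
  assumes om: "\<omega> \<in> Sigma2" and z: "\<And>i. i < L \<Longrightarrow> \<omega> (pos (base + i)) = 0" and iL: "i \<le> L"
  shows "circ_dist (X \<omega> x (base + i)) (X \<omega> x base + real i * \<rho>) \<le> real i * \<delta>"
    and "circ_dist (X \<omega> x (base + i)) (X \<omega> y (base + i)) \<le> (1 + \<eta>) ^ i * circ_dist (X \<omega> x base) (X \<omega> y base)"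
    and "(1 - \<eta>) ^ i * circ_dist (X \<omega> x base) (X \<omega> y base) \<le> circ_dist (X \<omega> x (base + i)) (X \<omega> y (base + i))"
  using zeros_seg_aux[OF om z iL] by blast+

lemma neutral_cycle:
  assumes om: "\<omega> \<in> Sigma2" and z: "\<And>i. i < P \<Longrightarrow> \<omega> (pos (base + i)) = 0"
  shows "(1 - \<eta>) ^ P * circ_dist (X \<omega> x base) (X \<omega> y base) \<le> circ_dist (X \<omega> x (base + P)) (X \<omega> y (base + P))"
  using zeros_seg(3)[OF om z] by simp

lemma expand_cycle:
  assumes om: "\<omega> \<in> Sigma2" and kP: "k < P"
    and sy: "\<And>i. i < P \<Longrightarrow> \<omega> (pos (base + i)) = (if i = k then 1 else 0)"
    and pl: "circ_dist (X \<omega> x base + real k * \<rho>) e + real k * \<delta> + (1 + \<eta>) ^ k * circ_dist (X \<omega> x base) (X \<omega> y base) < 3/100"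
    and lam0: "0 \<le> lam"
  shows "lam * (1 - \<eta>) ^ (P - 1) * circ_dist (X \<omega> x base) (X \<omega> y base) \<le> circ_dist (X \<omega> x (base + P)) (X \<omega> y (base + P))"
proof -
  define s0 where "s0 = circ_dist (X \<omega> x base) (X \<omega> y base)"
  have s0nn: "0 \<le> s0" by (simp add: s0_def cd_nonneg)
  have z1: "\<And>i. i < k \<Longrightarrow> \<omega> (pos (base + i)) = 0" using sy kP by auto
  have a1: "circ_dist (X \<omega> x (base + k)) (X \<omega> x base + real k * \<rho>) \<le> real k * \<delta>"
    using zeros_seg(1)[OF om z1, of k] by simp
  have a2: "circ_dist (X \<omega> x (base + k)) (X \<omega> y (base + k)) \<le> (1 + \<eta>) ^ k * s0"
    using zeros_seg(2)[OF om z1, of k] by (simp add: s0_def)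
  have a3: "(1 - \<eta>) ^ k * s0 \<le> circ_dist (X \<omega> x (base + k)) (X \<omega> y (base + k))"
    using zeros_seg(3)[OF om z1, of k] by (simp add: s0_def)
  have pw0: "0 \<le> (1 + \<eta>) ^ k * s0" using eta0 s0nn by simp
  have t1: "circ_dist (X \<omega> x (base + k)) e \<le> circ_dist (X \<omega> x (base + k)) (X \<omega> x base + real k * \<rho>) + circ_dist (X \<omega> x base + real k * \<rho>) e"
    by (rule cd_triangle)
  have pl': "circ_dist (X \<omega> x base + real k * \<rho>) e + real k * \<delta> + (1 + \<eta>) ^ k * s0 < 3/100" using pl by (simp add: s0_def)
  have ex: "circ_dist (X \<omega> x (base + k)) e < 3/100" using t1 a1 pl' pw0 by linarith
  have t2: "circ_dist (X \<omega> y (base + k)) e \<le> circ_dist (X \<omega> y (base + k)) (X \<omega> x (base + k)) + circ_dist (X \<omega> x (base + k)) e"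
    by (rule cd_triangle)
  have t3: "circ_dist (X \<omega> y (base + k)) (X \<omega> x (base + k)) = circ_dist (X \<omega> x (base + k)) (X \<omega> y (base + k))"
    by (rule cd_sym)
  have ey: "circ_dist (X \<omega> y (base + k)) e < 3/100" using t1 t2 t3 a1 a2 pl' by linarith
  have one: "\<omega> (pos (base + k)) = 1" using sy[OF kP] by simp
  have b1: "lam * circ_dist (X \<omega> x (base + k)) (X \<omega> y (base + k)) \<le> circ_dist (X \<omega> x (base + Suc k)) (X \<omega> y (base + Suc k))"
    using H1exp[OF om one ex ey] by simp
  have z2: "\<omega> (pos (base + Suc k + i)) = 0" if "i < P - Suc k" for i
  proof -
    have "Suc k + i < P" "Suc k + i \<noteq> k" using that by auto
    then have "\<omega> (pos (base + (Suc k + i))) = 0" using sy[of "Suc k + i"] by (simp only: if_False)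
    then show ?thesis by (simp add: add.assoc)
  qed
  have b2: "(1 - \<eta>) ^ (P - Suc k) * circ_dist (X \<omega> x (base + Suc k)) (X \<omega> y (base + Suc k)) \<le> circ_dist (X \<omega> x (base + P)) (X \<omega> y (base + P))"
  proof -
    have eq: "base + Suc k + (P - Suc k) = base + P" using kP by simp
    show ?thesis using zeros_seg(3)[OF om z2, where i="P - Suc k" and x=x and y=y, unfolded eq] by simp
  qed
  have e0: "0 \<le> 1 - \<eta>" using eta1 by simp
  have "lam * (1 - \<eta>) ^ (P - 1) * s0 = (1 - \<eta>) ^ (P - Suc k) * (lam * ((1 - \<eta>) ^ k * s0))"
  proof -
    have "P - 1 = (P - Suc k) + k" using kP by simp
    then show ?thesis by (simp add: power_add algebra_simps)
  qed
  also have "\<dots> \<le> (1 - \<eta>) ^ (P - Suc k) * (lam * circ_dist (X \<omega> x (base + k)) (X \<omega> y (base + k)))"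
    using a3 lam0 e0 by (intro mult_left_mono) auto
  also have "\<dots> \<le> (1 - \<eta>) ^ (P - Suc k) * circ_dist (X \<omega> x (base + Suc k)) (X \<omega> y (base + Suc k))"
    using b1 e0 by (intro mult_left_mono) auto
  also have "\<dots> \<le> circ_dist (X \<omega> x (base + P)) (X \<omega> y (base + P))" using b2 .
  finally show ?thesis by (simp add: s0_def)
qed

lemma colip_comp:
  assumes "\<omega> \<in> Sigma2"
  shows "circ_dist x y \<le> G ^ t * circ_dist (X \<omega> x t) (X \<omega> y t)"
proof (induction t)
  case 0 then show ?case by simp
next
  case (Suc t)
  have "circ_dist x y \<le> G ^ t * circ_dist (X \<omega> x t) (X \<omega> y t)" by (rule Suc)
  also have "\<dots> \<le> G ^ t * (G * circ_dist (X \<omega> x (Suc t)) (X \<omega> y (Suc t)))"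
    using Hcolip[OF assms] G1 by (intro mult_left_mono) auto
  finally show ?case by (simp add: algebra_simps)
qed

end


lemma cd_shift_int2: "circ_dist x (y + of_int k) = circ_dist x y"
  using cd_shift_int[of y k x] cd_sym[of x "y + of_int k"] cd_sym[of y x] by simp

lemma near_bounds:
  fixes F D :: "real \<Rightarrow> real"
  assumes L: "lift F" and der: "\<And>z. (F has_real_derivative D z) (at z)"
    and bd: "\<And>z. \<bar>z - c\<bar> < 1/8 \<Longrightarrow> lo \<le> D z \<and> D z \<le> hi" and lo0: "0 \<le> lo"
    and x: "circ_dist x c < r" and y: "circ_dist y c < r" and r: "r \<le> 12/100"
  shows "circ_dist (F x) (F y) \<le> hi * circ_dist x y"
    and "hi * (2 * r) \<le> 1/2 \<Longrightarrow> lo * circ_dist x y \<le> circ_dist (F x) (F y)"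
proof -
  obtain k where k: "\<bar>x - of_int k - c\<bar> < r" using cd_near[OF x] by blast
  obtain l where l: "\<bar>y - of_int l - c\<bar> < r" using cd_near[OF y] by blast
  define x' where "x' = x - of_int k"
  define y' where "y' = y - of_int l"
  have Fx: "F x = F x' + of_int k" using lift_int[OF L, of x' k] by (simp add: x'_def)
  have Fy: "F y = F y' + of_int l" using lift_int[OF L, of y' l] by (simp add: y'_def)
  have exy: "circ_dist (F x) (F y) = circ_dist (F x') (F y')"
    unfolding Fx Fy cd_shift_int cd_shift_int2 ..
  have cxy: "circ_dist x y = circ_dist x' y'"
  proof -
    have "x = x' + of_int k" "y = y' + of_int l" by (simp_all add: x'_def y'_def)
    then show ?thesis using cd_shift_int[of x' k] cd_shift_int2[of x' y' l] by simp
  qed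
  have x1: "\<bar>x' - c\<bar> < r" and y1: "\<bar>y' - c\<bar> < r" using k l by (simp_all add: x'_def y'_def)
  have dxy0: "\<bar>x' - y'\<bar> < 2 * r" using x1 y1 by linarith
  have dxy: "\<bar>x' - y'\<bar> < 24/100" using dxy0 r by linarith
  have cxy2: "circ_dist x' y' = \<bar>x' - y'\<bar>" using dxy by (intro cd_eq_abs) simp
  have gen: "lo * \<bar>x' - y'\<bar> \<le> \<bar>F x' - F y'\<bar> \<and> \<bar>F x' - F y'\<bar> \<le> hi * \<bar>x' - y'\<bar>"
  proof (cases "x' \<le> y'")
    case True
    have "lo * (y' - x') \<le> F y' - F x' \<and> F y' - F x' \<le> hi * (y' - x')"
    proof (rule mvt_bounds[OF der True])
      fix z assume "x' \<le> z" "z \<le> y'"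
      then have "\<bar>z - c\<bar> < 1/8" using x1 y1 r by linarith
      then show "lo \<le> D z \<and> D z \<le> hi" by (rule bd)
    qed
    moreover have "0 \<le> lo * (y' - x')" using True lo0 by simp
    ultimately show ?thesis using True by (simp add: abs_of_nonneg abs_minus_commute)
  next
    case False
    then have yx: "y' \<le> x'" by simp
    have "lo * (x' - y') \<le> F x' - F y' \<and> F x' - F y' \<le> hi * (x' - y')"
    proof (rule mvt_bounds[OF der yx])
      fix z assume "y' \<le> z" "z \<le> x'"
      then have "\<bar>z - c\<bar> < 1/8" using x1 y1 r by linarith
      then show "lo \<le> D z \<and> D z \<le> hi" by (rule bd)
    qed
    moreover have "0 \<le> lo * (x' - y')" using yx lo0 by simp
    ultimately show ?thesis using yx by (simp add: abs_of_nonneg)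
  qed
  show "circ_dist (F x) (F y) \<le> hi * circ_dist x y"
    unfolding exy cxy cxy2 using gen cd_le_abs[of "F x'" "F y'"] by linarith
  assume h: "hi * (2 * r) \<le> 1/2"
  have hi0: "0 \<le> hi" using bd[of c] lo0 by simp
  have "\<bar>F x' - F y'\<bar> \<le> 1/2"
  proof -
    have "hi * \<bar>x' - y'\<bar> \<le> hi * (2 * r)" using dxy0 hi0 by (intro mult_left_mono) auto
    then show ?thesis using gen h by linarith
  qed
  then have "circ_dist (F x') (F y') = \<bar>F x' - F y'\<bar>" by (rule cd_eq_abs)
  then show "lo * circ_dist x y \<le> circ_dist (F x) (F y)" unfolding exy cxy cxy2 using gen by simp
qed

lemma g1_facts:
  fixes a :: real and g1 :: "real \<Rightarrow> real"
  assumes ha: "a > 1" and g: "circle_diffeo g1"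
    and l0: "\<forall>x. \<bar>x\<bar> < 1/8 \<longrightarrow> g1 x = a * x"
    and lh: "\<forall>x. \<bar>x - 1/2\<bar> < 1/8 \<longrightarrow> g1 x = 1/2 + (x - 1/2) / a"
  shows "\<And>x. \<bar>x\<bar> < 1/8 \<Longrightarrow> deriv g1 x = a"
    and "\<And>x. \<bar>x - 1/2\<bar> < 1/8 \<Longrightarrow> deriv g1 x = 1/a"
    and "a < 19/5"
    and "\<And>p. 12/100 \<le> circ_dist p (1/2) \<Longrightarrow> 12/100/a \<le> circ_dist (g1 p) (1/2)"
proof -
  have a0: "a > 0" using ha by simp
  show "deriv g1 x = a" if x: "\<bar>x\<bar> < 1/8" for x
  proof -
    have "((\<lambda>y. a * y) has_real_derivative a) (at x)" by (auto intro!: derivative_eq_intros)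
    then have "(g1 has_real_derivative a) (at x)"
      by (rule has_field_derivative_transform_within_open[where S="{-1/8<..<1/8}"])
        (use x l0 in \<open>auto simp: abs_less_iff\<close>)
    then show ?thesis by (rule DERIV_imp_deriv)
  qed
  show "deriv g1 x = 1/a" if x: "\<bar>x - 1/2\<bar> < 1/8" for x
  proof -
    have "((\<lambda>y. 1/2 + (y - 1/2) / a) has_real_derivative 1/a) (at x)" using a0 by (auto intro!: derivative_eq_intros)
    then have "(g1 has_real_derivative 1/a) (at x)"
    proof (rule has_field_derivative_transform_within_open[where S="{3/8<..<5/8}"])
      show "open {3/8<..<5/8::real}" by simp
      have "- (1/8) < x - 1/2 \<and> x - 1/2 < 1/8" using x unfolding abs_less_iff by linarith
      then show "x \<in> {3/8<..<5/8}" by simp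
      fix y :: real assume "y \<in> {3/8<..<5/8}"
      then have "- (1/8) < y - 1/2 \<and> y - 1/2 < 1/8" by simp
      then have "\<bar>y - 1/2\<bar> < 1/8" unfolding abs_less_iff by linarith
      then show "1/2 + (y - 1/2) / a = g1 y" using lh by simp
    qed
    then show ?thesis by (rule DERIV_imp_deriv)
  qed
  have sm: "strict_mono g1" using g by (rule cdiff_strict_mono)
  have "g1 (124/1000) < g1 (376/1000)" using sm by (simp add: strict_mono_less)
  moreover have "g1 (124/1000) = a * (124/1000)" using l0 by simp
  moreover have "g1 (376/1000) = 1/2 - (124/1000) / a" using lh by simp
  ultimately have i1: "a * (124/1000) < 1/2 - (124/1000) / a" by simp
  show "a < 19/5"
  proof (rule ccontr)
    assume "\<not> a < 19/5"
    then have a38: "a \<ge> 19/5" by simp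
    have A: "0 \<le> (a - 19/5) * (124/1000 * a - 288/10000)" using a38 by (intro mult_nonneg_nonneg) auto
    have A2: "(a - 19/5) * (124/1000 * a - 288/10000) = 124/1000 * (a * a) - 1/2 * a + 10944/100000"
      by algebra
    have B: "a * (a * (124/1000)) < a * (1/2 - (124/1000) / a)" using i1 a0 by (intro mult_strict_left_mono) auto
    have B2: "a * (1/2 - (124/1000) / a) = 1/2 * a - 124/1000" using a0 by (simp add: field_simps)
    have B3: "a * (a * (124/1000)) = 124/1000 * (a * a)" by simp
    show False using A A2 B B2 B3 by linarith
  qed
  show "12/100/a \<le> circ_dist (g1 p) (1/2)" if hp: "12/100 \<le> circ_dist p (1/2)" for p
  proof -
    have L: "lift g1" using g by (rule cdiff_lift)
    obtain k where k: "circ_dist p (1/2) = \<bar>p - 1/2 - of_int k\<bar>" using cd_ex by blast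
    define p' where "p' = p - of_int k"
    have e1: "g1 p = g1 p' + of_int k" using lift_int[OF L, of p' k] by (simp add: p'_def)
    have e2: "circ_dist (g1 p) (1/2) = circ_dist (g1 p') (1/2)" unfolding e1 cd_shift_int ..
    have pe: "p' - 1/2 = p - 1/2 - of_int k" by (simp add: p'_def)
    have p1: "\<bar>p' - 1/2\<bar> \<le> 1/2" "12/100 \<le> \<bar>p' - 1/2\<bar>" unfolding pe using k hp cd_le_half[of p "1/2"] by linarith+
    have mono: "x \<le> y \<Longrightarrow> g1 x \<le> g1 y" for x y using sm by (simp add: strict_mono_less_eq)
    have g0: "g1 0 = 0" using l0 by simp
    have g11: "g1 1 = 1" using L g0 lift_int[OF L, of 0 1] by simp
    have g38: "g1 (38/100) = 1/2 - (12/100) / a" using lh by simp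
    have g62: "g1 (62/100) = 1/2 + (12/100) / a" using lh by simp
    have aa: "(12/100) / a \<le> 1/2" using ha by (simp add: field_simps)
    show ?thesis
    proof (cases "p' \<le> 1/2")
      case True
      then have "p' \<le> 38/100" "0 \<le> p'" using p1 by linarith+
      then have "g1 p' \<le> 1/2 - (12/100) / a" "0 \<le> g1 p'" using mono[of p' "38/100"] mono[of 0 p'] g38 g0 by auto
      moreover have "0 \<le> (12/100) / a" using a0 by simp
      ultimately have "g1 p' - 1/2 \<le> 0" by linarith
      then have ab: "\<bar>g1 p' - 1/2\<bar> = 1/2 - g1 p'" by simp
      have "\<bar>g1 p' - 1/2\<bar> \<le> 1/2" "(12/100) / a \<le> \<bar>g1 p' - 1/2\<bar>" unfolding ab using \<open>g1 p' \<le> _\<close> \<open>0 \<le> g1 p'\<close> by linarith+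
      then show ?thesis using e2 cd_eq_abs by simp
    next
      case False
      then have "62/100 \<le> p'" "p' \<le> 1" using p1 by linarith+
      then have "1/2 + (12/100) / a \<le> g1 p'" "g1 p' \<le> 1" using mono[of "62/100" p'] mono[of p' 1] g62 g11 by auto
      moreover have "0 \<le> (12/100) / a" using a0 by simp
      ultimately have "0 \<le> g1 p' - 1/2" by linarith
      then have ab: "\<bar>g1 p' - 1/2\<bar> = g1 p' - 1/2" by simp
      have "\<bar>g1 p' - 1/2\<bar> \<le> 1/2" "(12/100) / a \<le> \<bar>g1 p' - 1/2\<bar>" unfolding ab using \<open>1/2 + _ \<le> g1 p'\<close> \<open>g1 p' \<le> 1\<close> by linarith+
      then show ?thesis using e2 cd_eq_abs by simp
    qed
  qed
qed

lemma ms_extract: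
  assumes ms: "mild_skew b g1 \<delta> C \<alpha> f" and om: "\<omega> \<in> Sigma2" and g: "circle_diffeo g1"
    and gb: "\<And>x. 0 \<le> deriv g1 x \<and> deriv g1 x \<le> Mg"
  shows "circle_diffeo (f \<omega>)"
    and "\<And>x. circ_dist (f \<omega> x) (if \<omega> 0 = 0 then x + b else g1 x) < \<delta>"
    and "\<And>x. \<bar>deriv (f \<omega>) x - (if \<omega> 0 = 0 then 1 else deriv g1 x)\<bar> < \<delta>"
proof -
  define Gm where "Gm = (if \<omega> 0 = 0 then (\<lambda>x. x + b) else g1)"
  have c1: "circle_diffeo (f \<omega>)" and cl: "C1_close \<delta> (f \<omega>) Gm"
    using ms om unfolding mild_skew_def Gm_def by auto
  show "circle_diffeo (f \<omega>)" by (rule c1)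
  obtain L where L: "\<And>\<phi>. \<bar>deriv (f \<omega>) \<phi>\<bar> \<le> L" using ms om unfolding mild_skew_def by blast
  have s1: "(SUP x. circ_dist (f \<omega> x) (Gm x)) < \<delta>" and s2: "(SUP x. \<bar>deriv (f \<omega>) x - deriv Gm x\<bar>) < \<delta>"
    using cl unfolding C1_close_def by auto
  have dG: "deriv Gm x = (if \<omega> 0 = 0 then 1 else deriv g1 x)" for x
  proof (cases "\<omega> 0 = 0")
    case True
    have "((\<lambda>x. x + b) has_real_derivative 1) (at x)" by (auto intro!: derivative_eq_intros)
    then show ?thesis using True by (simp add: Gm_def DERIV_imp_deriv)
  qed (simp add: Gm_def)
  have b1: "bdd_above (range (\<lambda>x. circ_dist (f \<omega> x) (Gm x)))"
    by (rule bdd_aboveI[of _ "1/2"]) (use cd_le_half in auto)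
  have b2: "bdd_above (range (\<lambda>x. \<bar>deriv (f \<omega>) x - deriv Gm x\<bar>))"
  proof (rule bdd_aboveI[of _ "L + 1 + Mg"])
    fix y assume "y \<in> range (\<lambda>x. \<bar>deriv (f \<omega>) x - deriv Gm x\<bar>)"
    then obtain x where x: "y = \<bar>deriv (f \<omega>) x - deriv Gm x\<bar>" by auto
    have "\<bar>deriv Gm x\<bar> \<le> 1 + Mg" using gb[of x] by (simp add: dG)
    then show "y \<le> L + 1 + Mg" using x L[of x] by linarith
  qed
  show "circ_dist (f \<omega> x) (if \<omega> 0 = 0 then x + b else g1 x) < \<delta>" for x
  proof -
    have "circ_dist (f \<omega> x) (Gm x) \<le> (SUP x. circ_dist (f \<omega> x) (Gm x))" by (rule cSUP_upper[OF _ b1]) simp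
    then show ?thesis using s1 by (simp add: Gm_def split: if_splits)
  qed
  show "\<bar>deriv (f \<omega>) x - (if \<omega> 0 = 0 then 1 else deriv g1 x)\<bar> < \<delta>" for x
  proof -
    have "\<bar>deriv (f \<omega>) x - deriv Gm x\<bar> \<le> (SUP x. \<bar>deriv (f \<omega>) x - deriv Gm x\<bar>)" by (rule cSUP_upper[OF _ b2]) simp
    then show ?thesis using s2 dG by simp
  qed
qed

lemma dsigma_bound:
  assumes agree: "\<And>i. \<bar>i\<bar> < int R \<Longrightarrow> \<omega> i = \<omega>' i" and a0: "0 < \<alpha>"
  shows "dSigma \<omega> \<omega>' powr \<alpha> \<le> (2 powr (-\<alpha>)) ^ R"
proof (cases "\<omega> = \<omega>'")
  case True then show ?thesis by (simp add: dSigma_def)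
next
  case False
  define K where "K = (LEAST k::nat. \<exists>i. \<bar>i\<bar> = int k \<and> \<omega> i \<noteq> \<omega>' i)"
  obtain i where i: "\<omega> i \<noteq> \<omega>' i" using False by auto
  have ex: "\<exists>k::nat. \<exists>i. \<bar>i\<bar> = int k \<and> \<omega> i \<noteq> \<omega>' i"
    using i by (intro exI[of _ "nat \<bar>i\<bar>"]) auto
  have KR: "R \<le> K"
  proof -
    obtain j where j: "\<bar>j\<bar> = int K" "\<omega> j \<noteq> \<omega>' j" using LeastI_ex[OF ex] unfolding K_def by blast
    show ?thesis using agree[of j] j by (cases "R \<le> K") auto
  qed
  have d: "dSigma \<omega> \<omega>' = 2 powr (- real K)" using False by (simp add: dSigma_def K_def)
  have "dSigma \<omega> \<omega>' powr \<alpha> = 2 powr (- real K * \<alpha>)" unfolding d by (simp add: powr_powr)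
  also have "\<dots> \<le> 2 powr (- real R * \<alpha>)" using KR a0 by (intro powr_mono) auto
  also have "\<dots> = (2 powr (-\<alpha>)) ^ R" by (simp add: powr_realpow[symmetric] powr_powr mult.commute)
  finally show ?thesis .
qed

lemma holder_bound:
  assumes ms: "mild_skew b g1 \<delta> C \<alpha> f" and om: "\<omega> \<in> Sigma2" "\<omega>' \<in> Sigma2"
    and agree: "\<And>i. \<bar>i\<bar> < int R \<Longrightarrow> \<omega> i = \<omega>' i" and a0: "0 < \<alpha>" and C0: "0 \<le> C"
  shows "circ_dist (f \<omega> x) (f \<omega>' x) \<le> C * (2 powr (-\<alpha>)) ^ R"
proof -
  have "circ_dist (f \<omega> x) (f \<omega>' x) \<le> C * dSigma \<omega> \<omega>' powr \<alpha>" using ms om unfolding mild_skew_def by blast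
  also have "\<dots> \<le> C * (2 powr (-\<alpha>)) ^ R" using dsigma_bound[OF agree a0] C0 by (intro mult_left_mono) auto
  finally show ?thesis .
qed

lemma shift_Sigma: "\<omega> \<in> Sigma2 \<Longrightarrow> shift k \<omega> \<in> Sigma2"
  by (simp add: Sigma2_def shift_def)

lemma inv_lip:
  assumes F: "circle_diffeo F" and lo: "\<And>u v. l * circ_dist u v \<le> circ_dist (F u) (F v)" and l0: "0 < l"
  shows "circ_dist (inv F x) (inv F y) \<le> (1 / l) * circ_dist x y"
proof -
  have "l * circ_dist (inv F x) (inv F y) \<le> circ_dist x y" using lo[of "inv F x" "inv F y"] cdiff_inv2[OF F] by simp
  then show ?thesis using l0 by (simp add: field_simps)
qed

lemma inv_close:
  assumes F1: "circle_diffeo F1" and F2: "circle_diffeo F2"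
    and lo: "\<And>u v. l * circ_dist u v \<le> circ_dist (F1 u) (F1 v)" and l0: "0 < l"
    and cl: "\<And>w. circ_dist (F1 w) (F2 w) \<le> E"
  shows "circ_dist (inv F1 z) (inv F2 z) \<le> (1 / l) * E"
proof -
  define w where "w = inv F2 z"
  have "z = F2 w" using cdiff_inv2[OF F2] by (simp add: w_def)
  have "l * circ_dist (inv F1 z) w \<le> circ_dist (F1 (inv F1 z)) (F1 w)" by (rule lo)
  also have "\<dots> = circ_dist (F2 w) (F1 w)" using cdiff_inv2[OF F1] \<open>z = F2 w\<close> by simp
  also have "\<dots> \<le> E" using cl[of w] cd_sym by metis
  finally show ?thesis using l0 by (simp add: w_def field_simps)
qed

locale ctx =
  fixes b a C \<alpha> \<delta> mg Mg \<mu> G :: real and g1 :: "real \<Rightarrow> real" and f :: "(int \<Rightarrow> nat) \<Rightarrow> real \<Rightarrow> real"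
  assumes ms: "mild_skew b g1 \<delta> C \<alpha> f"
    and ha: "a > 1" and g: "circle_diffeo g1"
    and l0: "\<forall>x. \<bar>x\<bar> < 1/8 \<longrightarrow> g1 x = a * x"
    and lh: "\<forall>x. \<bar>x - 1/2\<bar> < 1/8 \<longrightarrow> g1 x = 1/2 + (x - 1/2) / a"
    and gb: "\<And>x. mg \<le> deriv g1 x \<and> deriv g1 x \<le> Mg" and mg0: "0 < mg"
    and mu: "\<mu> = min 1 mg / 2"
    and GG: "Mg + 1 \<le> G" "1 / \<mu> \<le> G" "2 \<le> G"
    and del: "0 < \<delta>" "\<delta> \<le> \<mu>" "\<delta> \<le> 1/10" "\<delta> < 12/100/a - 3/100"
    and a0: "0 < \<alpha>" and C0: "0 \<le> C"
begin

lemma mu0: "0 < \<mu>" "\<mu> \<le> 1/2" using mu mg0 by auto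

lemma Mg0: "0 \<le> Mg" using gb[of 0] mg0 by linarith

lemma fd:
  assumes om: "\<omega> \<in> Sigma2"
  shows "circle_diffeo (f \<omega>)"
    and "\<And>x. \<mu> \<le> deriv (f \<omega>) x \<and> deriv (f \<omega>) x \<le> G"
    and "\<omega> 0 = 0 \<Longrightarrow> 1 - \<delta> \<le> deriv (f \<omega>) x \<and> deriv (f \<omega>) x \<le> 1 + \<delta>"
    and "\<omega> 0 \<noteq> 0 \<Longrightarrow> \<bar>x\<bar> < 1/8 \<Longrightarrow> a - \<delta> \<le> deriv (f \<omega>) x \<and> deriv (f \<omega>) x \<le> a + \<delta>"
    and "\<omega> 0 \<noteq> 0 \<Longrightarrow> \<bar>x - 1/2\<bar> < 1/8 \<Longrightarrow> 0 \<le> deriv (f \<omega>) x \<and> deriv (f \<omega>) x \<le> 1/a + \<delta>"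
    and "\<And>x. circ_dist (f \<omega> x) (if \<omega> 0 = 0 then x + b else g1 x) < \<delta>"
proof -
  have gb': "\<And>x. 0 \<le> deriv g1 x \<and> deriv g1 x \<le> Mg" using gb mg0 by (meson less_eq_real_def order_trans)
  note E = ms_extract[OF ms om g gb']
  show "circle_diffeo (f \<omega>)" by (rule E(1))
  show "circ_dist (f \<omega> x) (if \<omega> 0 = 0 then x + b else g1 x) < \<delta>" for x by (rule E(2))
  have dpos: "0 < deriv (f \<omega>) x" for x using E(1) by (simp add: circle_diffeo_def)
  note gf = g1_facts[OF ha g l0 lh]
  show "\<mu> \<le> deriv (f \<omega>) x \<and> deriv (f \<omega>) x \<le> G" for x
  proof (cases "\<omega> 0 = 0")
    case True
    then show ?thesis using E(3)[of x] mu del GG mu0 by (simp add: abs_less_iff; linarith)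
  next
    case False
    then show ?thesis using E(3)[of x] gb[of x] mu del GG mu0 by (simp add: abs_less_iff; linarith)
  qed
  show "\<omega> 0 = 0 \<Longrightarrow> 1 - \<delta> \<le> deriv (f \<omega>) x \<and> deriv (f \<omega>) x \<le> 1 + \<delta>"
    using E(3)[of x] by (simp add: abs_less_iff; linarith)
  show "a - \<delta> \<le> deriv (f \<omega>) x \<and> deriv (f \<omega>) x \<le> a + \<delta>" if "\<omega> 0 \<noteq> 0" "\<bar>x\<bar> < 1/8"
    using E(3)[of x] gf(1)[OF that(2)] that(1) by (simp add: abs_less_iff; linarith)
  show "0 \<le> deriv (f \<omega>) x \<and> deriv (f \<omega>) x \<le> 1/a + \<delta>" if "\<omega> 0 \<noteq> 0" "\<bar>x - 1/2\<bar> < 1/8"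
    using E(3)[of x] gf(2)[OF that(2)] that(1) dpos[of x] by (simp add: abs_less_iff; linarith)
qed

lemma shift0: "shift k \<omega> 0 = \<omega> k" by (simp add: shift_def)

lemma sig01: "\<omega> \<in> Sigma2 \<Longrightarrow> \<omega> i \<noteq> 0 \<Longrightarrow> \<omega> i = 1"
proof -
  assume "\<omega> \<in> Sigma2" "\<omega> i \<noteq> 0"
  moreover have "\<omega> i \<le> 1" using \<open>\<omega> \<in> Sigma2\<close> by (simp add: Sigma2_def)
  ultimately show "\<omega> i = 1" by linarith
qed

lemma kap: "0 \<le> 2 powr (-\<alpha>)" "2 powr (-\<alpha>) \<le> (1::real)"
proof -
  show "0 \<le> 2 powr (-\<alpha>)" by simp
  have "2 powr (-\<alpha>) \<le> 2 powr 0" using a0 by (intro powr_mono) auto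
  then show "2 powr (-\<alpha>) \<le> (1::real)" by simp
qed

lemma fwd_side: "side (\<lambda>\<omega> s. f (shift (int s) \<omega>)) int G b 0 \<delta> (2*\<delta>) (a - \<delta>) (2/\<mu>) (C/\<mu>) (2 powr (-\<alpha>))"
proof (unfold_locales)
  show "1 \<le> G" "1 + 2 * \<delta> \<le> G" "0 \<le> 2 * \<delta>" "2 * \<delta> \<le> 1" "0 \<le> \<delta>" using GG del by auto
  show "0 \<le> 2 / \<mu>" "0 \<le> C / \<mu>" using mu0 C0 by auto
  show "0 \<le> 2 powr (-\<alpha>)" "2 powr (-\<alpha>) \<le> (1::real)" by (rule kap)+
next
  fix \<omega> :: "int \<Rightarrow> nat" and s :: nat and x y :: real
  assume om: "\<omega> \<in> Sigma2"
  define \<omega>1 where "\<omega>1 = shift (int s) \<omega>"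
  have o1: "\<omega>1 \<in> Sigma2" using om by (simp add: \<omega>1_def shift_Sigma)
  have sym0: "\<omega>1 0 = \<omega> (int s)" by (simp add: \<omega>1_def shift0)
  note F = fd[OF o1]
  have L: "lift (f \<omega>1)" by (rule cdiff_lift[OF F(1)])
  have dr: "\<And>z. (f \<omega>1 has_real_derivative deriv (f \<omega>1) z) (at z)" by (rule cdiff_der[OF F(1)])
  have lip: "circ_dist (f \<omega>1 x) (f \<omega>1 y) \<le> G * circ_dist x y" and colip: "\<mu> * circ_dist x y \<le> circ_dist (f \<omega>1 x) (f \<omega>1 y)"
    using lift_lip[OF L dr F(2)] mu0 by auto
  show "circ_dist (f (shift (int s) \<omega>) x) (f (shift (int s) \<omega>) y) \<le> G * circ_dist x y" using lip by (simp add: \<omega>1_def)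
  have "circ_dist x y \<le> (1/\<mu>) * circ_dist (f \<omega>1 x) (f \<omega>1 y)" using colip mu0 by (simp add: field_simps)
  also have "\<dots> \<le> G * circ_dist (f \<omega>1 x) (f \<omega>1 y)" using GG cd_nonneg by (intro mult_right_mono) auto
  finally show "circ_dist x y \<le> G * circ_dist (f (shift (int s) \<omega>) x) (f (shift (int s) \<omega>) y)" by (simp add: \<omega>1_def)
  {
    assume z: "\<omega> (int s) = 0"
    then have z1: "\<omega>1 0 = 0" using sym0 by simp
    show "circ_dist (f (shift (int s) \<omega>) x) (x + b) \<le> \<delta>" using F(6)[of x] z1 by (simp add: \<omega>1_def)
    have b0: "\<And>z. 1 - \<delta> \<le> deriv (f \<omega>1) z \<and> deriv (f \<omega>1) z \<le> 1 + \<delta>" using F(3) z1 by blast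
    have l1: "circ_dist (f \<omega>1 x) (f \<omega>1 y) \<le> (1 + \<delta>) * circ_dist x y" and l2: "(1 - \<delta>) * circ_dist x y \<le> circ_dist (f \<omega>1 x) (f \<omega>1 y)"
      using lift_lip[OF L dr b0] del by auto
    have "circ_dist (f \<omega>1 x) (f \<omega>1 y) \<le> (1 + 2 * \<delta>) * circ_dist x y"
      using l1 del cd_nonneg[of x y] by (smt (verit) mult_right_mono)
    then show "circ_dist (f (shift (int s) \<omega>) x) (f (shift (int s) \<omega>) y) \<le> (1 + 2 * \<delta>) * circ_dist x y" by (simp add: \<omega>1_def)
    have "(1 - 2 * \<delta>) * circ_dist x y \<le> circ_dist (f \<omega>1 x) (f \<omega>1 y)"
      using l2 del cd_nonneg[of x y] by (smt (verit) mult_right_mono)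
    then show "(1 - 2 * \<delta>) * circ_dist x y \<le> circ_dist (f (shift (int s) \<omega>) x) (f (shift (int s) \<omega>) y)" by (simp add: \<omega>1_def)
  }
  {
    assume o: "\<omega> (int s) = 1" and x: "circ_dist x 0 < 3/100" and y: "circ_dist y 0 < 3/100"
    then have n0: "\<omega>1 0 \<noteq> 0" using sym0 by simp
    have bd: "\<And>z. \<bar>z - 0\<bar> < 1/8 \<Longrightarrow> a - \<delta> \<le> deriv (f \<omega>1) z \<and> deriv (f \<omega>1) z \<le> a + \<delta>" using F(4)[OF n0] by simp
    have a38: "a < 19/5" using g1_facts(3)[OF ha g l0 lh] .
    have "(a + \<delta>) * (2 * (3/100)) \<le> 1/2" using a38 del by simp
    moreover have "0 \<le> a - \<delta>" using ha del by simp
    ultimately have "(a - \<delta>) * circ_dist x y \<le> circ_dist (f \<omega>1 x) (f \<omega>1 y)"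
      using near_bounds(2)[OF L dr bd _ x y] by simp
    then show "(a - \<delta>) * circ_dist x y \<le> circ_dist (f (shift (int s) \<omega>) x) (f (shift (int s) \<omega>) y)" by (simp add: \<omega>1_def)
  }
next
  fix \<omega> \<omega>' :: "int \<Rightarrow> nat" and s :: nat and z :: real
  assume om: "\<omega> \<in> Sigma2" "\<omega>' \<in> Sigma2" and eq: "\<omega> (int s) = \<omega>' (int s)"
  define \<omega>1 where "\<omega>1 = shift (int s) \<omega>"
  define \<omega>2 where "\<omega>2 = shift (int s) \<omega>'"
  have o1: "\<omega>1 \<in> Sigma2" "\<omega>2 \<in> Sigma2" using om by (simp_all add: \<omega>1_def \<omega>2_def shift_Sigma)
  have e: "\<omega>1 0 = \<omega>2 0" using eq by (simp add: \<omega>1_def \<omega>2_def shift0)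
  have "circ_dist (f \<omega>1 z) (f \<omega>2 z) \<le> circ_dist (f \<omega>1 z) (if \<omega>1 0 = 0 then z + b else g1 z) + circ_dist (if \<omega>1 0 = 0 then z + b else g1 z) (f \<omega>2 z)"
    by (rule cd_triangle)
  also have "\<dots> < 2 * \<delta>" using fd(6)[OF o1(1), of z] fd(6)[OF o1(2), of z] e cd_sym by (smt (verit))
  also have "\<dots> \<le> 2 / \<mu> * \<delta>" using mu0 del by (simp add: field_simps)
  finally show "circ_dist (f (shift (int s) \<omega>) z) (f (shift (int s) \<omega>') z) \<le> 2 / \<mu> * \<delta>" by (simp add: \<omega>1_def \<omega>2_def)
next
  fix \<omega> \<omega>' :: "int \<Rightarrow> nat" and t s :: nat and z :: real
  assume om: "\<omega> \<in> Sigma2" "\<omega>' \<in> Sigma2" and ag: "\<forall>i. - int t \<le> i \<and> i < int t \<longrightarrow> \<omega> i = \<omega>' i" and st: "s < t"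
  have ag2: "shift (int s) \<omega> i = shift (int s) \<omega>' i" if "\<bar>i\<bar> < int (t - s)" for i
  proof -
    have "- int t \<le> i + int s" "i + int s < int t" using that st by (simp_all add: abs_less_iff) 
    then show ?thesis using ag by (simp add: shift_def)
  qed
  have "circ_dist (f (shift (int s) \<omega>) z) (f (shift (int s) \<omega>') z) \<le> C * (2 powr (-\<alpha>)) ^ (t - s)"
    by (rule holder_bound[OF ms shift_Sigma[OF om(1)] shift_Sigma[OF om(2)] ag2 a0 C0])
  also have "\<dots> \<le> C * (2 powr (-\<alpha>)) ^ (t - Suc s)" using C0 kap by (intro mult_left_mono power_decreasing) auto
  also have "\<dots> \<le> C / \<mu> * (2 powr (-\<alpha>)) ^ (t - Suc s)"
  proof -
    have "C * \<mu> \<le> C" using C0 mu0 by (simp add: mult_left_le)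
    then have "C \<le> C / \<mu>" using mu0 by (simp add: field_simps)
    then show ?thesis using kap by (intro mult_right_mono) auto
  qed
  finally show "circ_dist (f (shift (int s) \<omega>) z) (f (shift (int s) \<omega>') z) \<le> C / \<mu> * (2 powr (-\<alpha>)) ^ (t - Suc s)" .
next
  fix s t :: nat assume "s < t"
  then show "- int t \<le> int s \<and> int s < int t" by simp
qed

lemma bwd_side: "side (\<lambda>\<omega> s. inv (f (shift (- int s - 1) \<omega>))) (\<lambda>s. - int s - 1) G (-b) (1/2) \<delta> (2*\<delta>) (1 / (1/a + \<delta>)) (2/\<mu>) (C/\<mu>) (2 powr (-\<alpha>))"
proof (unfold_locales)
  show "1 \<le> G" "1 + 2 * \<delta> \<le> G" "0 \<le> 2 * \<delta>" "2 * \<delta> \<le> 1" "0 \<le> \<delta>" using GG del by auto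
  show "0 \<le> 2 / \<mu>" "0 \<le> C / \<mu>" using mu0 C0 by auto
  show "0 \<le> 2 powr (-\<alpha>)" "2 powr (-\<alpha>) \<le> (1::real)" by (rule kap)+
next
  fix \<omega> :: "int \<Rightarrow> nat" and s :: nat and x y :: real
  assume om: "\<omega> \<in> Sigma2"
  define \<omega>1 where "\<omega>1 = shift (- int s - 1) \<omega>"
  define p where "p = inv (f \<omega>1) x"
  define q where "q = inv (f \<omega>1) y"
  have o1: "\<omega>1 \<in> Sigma2" using om by (simp add: \<omega>1_def shift_Sigma)
  have sym0: "\<omega>1 0 = \<omega> (- int s - 1)" by (simp add: \<omega>1_def shift0)
  note F = fd[OF o1]
  have L: "lift (f \<omega>1)" by (rule cdiff_lift[OF F(1)])
  have dr: "\<And>z. (f \<omega>1 has_real_derivative deriv (f \<omega>1) z) (at z)" by (rule cdiff_der[OF F(1)])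
  have fp: "f \<omega>1 p = x" "f \<omega>1 q = y" using cdiff_inv2[OF F(1)] by (simp_all add: p_def q_def)
  have lip: "circ_dist (f \<omega>1 p) (f \<omega>1 q) \<le> G * circ_dist p q" and colip: "\<mu> * circ_dist p q \<le> circ_dist (f \<omega>1 p) (f \<omega>1 q)"
    using lift_lip[OF L dr F(2)] mu0 by auto
  have HH: "inv (f (shift (- int s - 1) \<omega>)) x = p" "inv (f (shift (- int s - 1) \<omega>)) y = q" by (simp_all add: p_def q_def \<omega>1_def)
  have "circ_dist p q \<le> (1/\<mu>) * circ_dist x y" using colip mu0 fp by (simp add: field_simps)
  also have "\<dots> \<le> G * circ_dist x y" using GG cd_nonneg by (intro mult_right_mono) auto
  finally show "circ_dist (inv (f (shift (- int s - 1) \<omega>)) x) (inv (f (shift (- int s - 1) \<omega>)) y) \<le> G * circ_dist x y"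
    unfolding HH .
  show "circ_dist x y \<le> G * circ_dist (inv (f (shift (- int s - 1) \<omega>)) x) (inv (f (shift (- int s - 1) \<omega>)) y)"
    unfolding HH using lip fp by simp
  {
    assume z: "\<omega> (- int s - 1) = 0"
    then have z1: "\<omega>1 0 = 0" using sym0 by simp
    have r: "circ_dist (f \<omega>1 p) (p + b) < \<delta>" using F(6)[of p] z1 by simp
    have "circ_dist p (x + - b) = circ_dist (p + b) (x + - b + b)" by (rule cd_translate[symmetric])
    also have "\<dots> = circ_dist (f \<omega>1 p) (p + b)" using fp cd_sym by simp
    finally show "circ_dist (inv (f (shift (- int s - 1) \<omega>)) x) (x + - b) \<le> \<delta>" unfolding HH using r by simp
    have b0: "\<And>z. 1 - \<delta> \<le> deriv (f \<omega>1) z \<and> deriv (f \<omega>1) z \<le> 1 + \<delta>" using F(3) z1 by blast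
    have l1: "circ_dist (f \<omega>1 p) (f \<omega>1 q) \<le> (1 + \<delta>) * circ_dist p q" and l2: "(1 - \<delta>) * circ_dist p q \<le> circ_dist (f \<omega>1 p) (f \<omega>1 q)"
      using lift_lip[OF L dr b0] del by auto
    have pq0: "0 \<le> circ_dist p q" by (rule cd_nonneg)
    have h1: "0 \<le> \<delta> * (1 - 2 * \<delta>)" using del by (intro mult_nonneg_nonneg) auto
    have h2: "(1 + 2 * \<delta>) * (1 - \<delta>) = 1 + \<delta> * (1 - 2 * \<delta>)" by (simp add: algebra_simps)
    have k1: "1 \<le> (1 + 2 * \<delta>) * (1 - \<delta>)" using h1 h2 by linarith
    have "circ_dist p q \<le> ((1 + 2 * \<delta>) * (1 - \<delta>)) * circ_dist p q" using k1 pq0 by (simp add: mult_le_cancel_right1)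
    also have "\<dots> = (1 + 2 * \<delta>) * ((1 - \<delta>) * circ_dist p q)" by simp
    also have "\<dots> \<le> (1 + 2 * \<delta>) * circ_dist x y" using l2 fp del by (intro mult_left_mono) auto
    finally show "circ_dist (inv (f (shift (- int s - 1) \<omega>)) x) (inv (f (shift (- int s - 1) \<omega>)) y) \<le> (1 + 2 * \<delta>) * circ_dist x y"
      unfolding HH .
    have h3: "0 \<le> \<delta> * (1 + 2 * \<delta>)" using del by (intro mult_nonneg_nonneg) auto
    have h4: "(1 - 2 * \<delta>) * (1 + \<delta>) = 1 - \<delta> * (1 + 2 * \<delta>)" by (simp add: algebra_simps)
    have k2: "(1 - 2 * \<delta>) * (1 + \<delta>) \<le> 1" using h3 h4 by linarith
    have "(1 - 2 * \<delta>) * circ_dist x y \<le> (1 - 2 * \<delta>) * ((1 + \<delta>) * circ_dist p q)" using l1 fp del by (intro mult_left_mono) auto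
    also have "\<dots> = ((1 - 2 * \<delta>) * (1 + \<delta>)) * circ_dist p q" by simp
    also have "\<dots> \<le> 1 * circ_dist p q" using k2 pq0 by (intro mult_right_mono) auto
    also have "\<dots> = circ_dist p q" by simp
    finally show "(1 - 2 * \<delta>) * circ_dist x y \<le> circ_dist (inv (f (shift (- int s - 1) \<omega>)) x) (inv (f (shift (- int s - 1) \<omega>)) y)"
      unfolding HH .
  }
  {
    assume o: "\<omega> (- int s - 1) = 1" and x: "circ_dist x (1/2) < 3/100" and y: "circ_dist y (1/2) < 3/100"
    then have n0: "\<omega>1 0 \<noteq> 0" using sym0 by simp
    have close: "circ_dist (f \<omega>1 z) (g1 z) < \<delta>" for z using F(6)[of z] n0 by simp
    have gf4: "\<And>p. 12/100 \<le> circ_dist p (1/2) \<Longrightarrow> 12/100/a \<le> circ_dist (g1 p) (1/2)" using g1_facts(4)[OF ha g l0 lh] by blast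
    have near: "circ_dist u (1/2) < 12/100" if u: "circ_dist (f \<omega>1 u) (1/2) < 3/100" for u
    proof (rule ccontr)
      assume "\<not> circ_dist u (1/2) < 12/100"
      then have "12/100/a \<le> circ_dist (g1 u) (1/2)" using gf4 by simp
      moreover have "circ_dist (g1 u) (1/2) \<le> circ_dist (g1 u) (f \<omega>1 u) + circ_dist (f \<omega>1 u) (1/2)" by (rule cd_triangle)
      moreover have "circ_dist (g1 u) (f \<omega>1 u) < \<delta>" using close[of u] cd_sym by metis
      ultimately show False using u del by linarith
    qed
    have pn: "circ_dist p (1/2) < 12/100" and qn: "circ_dist q (1/2) < 12/100" using near x y fp by auto
    have bd: "\<And>z. \<bar>z - 1/2\<bar> < 1/8 \<Longrightarrow> 0 \<le> deriv (f \<omega>1) z \<and> deriv (f \<omega>1) z \<le> 1/a + \<delta>" using F(5)[OF n0] by blast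
    have "circ_dist (f \<omega>1 p) (f \<omega>1 q) \<le> (1/a + \<delta>) * circ_dist p q"
      by (rule near_bounds(1)[OF L dr bd _ pn qn]) auto
    then have "circ_dist x y \<le> (1/a + \<delta>) * circ_dist p q" using fp by simp
    moreover have "0 < 1/a + \<delta>" using ha del by simp
    ultimately have "1 / (1/a + \<delta>) * circ_dist x y \<le> circ_dist p q" by (simp add: field_simps)
    then show "1 / (1/a + \<delta>) * circ_dist x y \<le> circ_dist (inv (f (shift (- int s - 1) \<omega>)) x) (inv (f (shift (- int s - 1) \<omega>)) y)"
      unfolding HH .
  }
next
  fix \<omega> \<omega>' :: "int \<Rightarrow> nat" and s :: nat and z :: real
  assume om: "\<omega> \<in> Sigma2" "\<omega>' \<in> Sigma2" and eq: "\<omega> (- int s - 1) = \<omega>' (- int s - 1)"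
  define \<omega>1 where "\<omega>1 = shift (- int s - 1) \<omega>"
  define \<omega>2 where "\<omega>2 = shift (- int s - 1) \<omega>'"
  have o1: "\<omega>1 \<in> Sigma2" "\<omega>2 \<in> Sigma2" using om by (simp_all add: \<omega>1_def \<omega>2_def shift_Sigma)
  have e: "\<omega>1 0 = \<omega>2 0" using eq by (simp add: \<omega>1_def \<omega>2_def shift0)
  have cl: "circ_dist (f \<omega>1 w) (f \<omega>2 w) \<le> 2 * \<delta>" for w
  proof -
    have "circ_dist (f \<omega>1 w) (f \<omega>2 w) \<le> circ_dist (f \<omega>1 w) (if \<omega>1 0 = 0 then w + b else g1 w) + circ_dist (if \<omega>1 0 = 0 then w + b else g1 w) (f \<omega>2 w)"
      by (rule cd_triangle)
    also have "\<dots> < 2 * \<delta>" using fd(6)[OF o1(1), of w] fd(6)[OF o1(2), of w] e cd_sym by (smt (verit))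
    finally show ?thesis by simp
  qed
  have lo: "\<mu> * circ_dist u v \<le> circ_dist (f \<omega>1 u) (f \<omega>1 v)" for u v
    using lift_lip(2)[OF cdiff_lift[OF fd(1)[OF o1(1)]] cdiff_der[OF fd(1)[OF o1(1)]] fd(2)[OF o1(1)]] mu0 by auto
  have "circ_dist (inv (f \<omega>1) z) (inv (f \<omega>2) z) \<le> (1/\<mu>) * (2 * \<delta>)"
    by (rule inv_close[OF fd(1)[OF o1(1)] fd(1)[OF o1(2)] lo mu0(1) cl])
  then show "circ_dist (inv (f (shift (- int s - 1) \<omega>)) z) (inv (f (shift (- int s - 1) \<omega>')) z) \<le> 2 / \<mu> * \<delta>"
    by (simp add: \<omega>1_def \<omega>2_def)
next
  fix \<omega> \<omega>' :: "int \<Rightarrow> nat" and t s :: nat and z :: real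
  assume om: "\<omega> \<in> Sigma2" "\<omega>' \<in> Sigma2" and ag: "\<forall>i. - int t \<le> i \<and> i < int t \<longrightarrow> \<omega> i = \<omega>' i" and st: "s < t"
  define \<omega>1 where "\<omega>1 = shift (- int s - 1) \<omega>"
  define \<omega>2 where "\<omega>2 = shift (- int s - 1) \<omega>'"
  have o1: "\<omega>1 \<in> Sigma2" "\<omega>2 \<in> Sigma2" using om by (simp_all add: \<omega>1_def \<omega>2_def shift_Sigma)
  have ag2: "\<omega>1 i = \<omega>2 i" if "\<bar>i\<bar> < int (t - Suc s)" for i
  proof -
    have "- int t \<le> i + (- int s - 1)" "i + (- int s - 1) < int t" using that st by (simp_all add: abs_less_iff)
    then show ?thesis using ag by (simp add: shift_def \<omega>1_def \<omega>2_def)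
  qed
  have cl: "circ_dist (f \<omega>1 w) (f \<omega>2 w) \<le> C * (2 powr (-\<alpha>)) ^ (t - Suc s)" for w
    by (rule holder_bound[OF ms o1 ag2 a0 C0])
  have lo: "\<mu> * circ_dist u v \<le> circ_dist (f \<omega>1 u) (f \<omega>1 v)" for u v
    using lift_lip(2)[OF cdiff_lift[OF fd(1)[OF o1(1)]] cdiff_der[OF fd(1)[OF o1(1)]] fd(2)[OF o1(1)]] mu0 by auto
  have "circ_dist (inv (f \<omega>1) z) (inv (f \<omega>2) z) \<le> (1/\<mu>) * (C * (2 powr (-\<alpha>)) ^ (t - Suc s))"
    by (rule inv_close[OF fd(1)[OF o1(1)] fd(1)[OF o1(2)] lo mu0(1) cl])
  then show "circ_dist (inv (f (shift (- int s - 1) \<omega>)) z) (inv (f (shift (- int s - 1) \<omega>')) z) \<le> C / \<mu> * (2 powr (-\<alpha>)) ^ (t - Suc s)"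
    by (simp add: \<omega>1_def \<omega>2_def)
next
  fix s t :: nat assume "s < t"
  then show "- int t \<le> - int s - 1 \<and> - int s - 1 < int t" by simp
qed

end


lemma cmp_front:
  assumes "\<And>s. H \<omega>' s = H \<omega> (Suc s)"
  shows "cmp H \<omega> x (Suc t) = cmp H \<omega>' (H \<omega> 0 x) t"
proof (induction t)
  case 0 then show ?case by simp
next
  case (Suc t)
  have "cmp H \<omega> x (Suc (Suc t)) = H \<omega> (Suc t) (cmp H \<omega> x (Suc t))" by simp
  also have "\<dots> = H \<omega>' t (cmp H \<omega>' (H \<omega> 0 x) t)" using Suc assms by simp
  finally show ?case by simp
qed

lemma shift_shift: "shift a (shift b \<omega>) = shift (a + b) \<omega>"
  by (rule ext) (simp add: shift_def algebra_simps)

lemma fwd_comp: "fwd f t \<omega> x = cmp (\<lambda>\<omega> s. f (shift (int s) \<omega>)) \<omega> x t"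
proof (induction t arbitrary: \<omega> x)
  case 0 then show ?case by simp
next
  case (Suc t)
  have "fwd f (Suc t) \<omega> x = fwd f t (shift 1 \<omega>) (f \<omega> x)" by simp
  also have "\<dots> = cmp (\<lambda>\<omega> s. f (shift (int s) \<omega>)) (shift 1 \<omega>) (f \<omega> x) t" by (rule Suc)
  also have "\<dots> = cmp (\<lambda>\<omega> s. f (shift (int s) \<omega>)) \<omega> x (Suc t)"
  proof -
    have h: "\<And>s. f (shift (int s) (shift 1 \<omega>)) = f (shift (int (Suc s)) \<omega>)" by (simp add: shift_shift add.commute)
    have h0: "f (shift (int 0) \<omega>) = f \<omega>" by (simp add: shift_def)
    show ?thesis using cmp_front[where H="\<lambda>\<omega> s. f (shift (int s) \<omega>)" and \<omega>'="shift 1 \<omega>" and \<omega>=\<omega>, OF h, of x t] h0 by simp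
  qed
  finally show ?case .
qed

lemma bwd_comp: "bwd f t \<omega> x = cmp (\<lambda>\<omega> s. inv (f (shift (- int s - 1) \<omega>))) \<omega> x t"
proof (induction t arbitrary: \<omega> x)
  case 0 then show ?case by simp
next
  case (Suc t)
  have "bwd f (Suc t) \<omega> x = bwd f t (shift (-1) \<omega>) (inv (f (shift (-1) \<omega>)) x)" by simp
  also have "\<dots> = cmp (\<lambda>\<omega> s. inv (f (shift (- int s - 1) \<omega>))) (shift (-1) \<omega>) (inv (f (shift (-1) \<omega>)) x) t" by (rule Suc)
  also have "\<dots> = cmp (\<lambda>\<omega> s. inv (f (shift (- int s - 1) \<omega>))) \<omega> x (Suc t)"
  proof -
    have h: "\<And>s. inv (f (shift (- int s - 1) (shift (-1) \<omega>))) = inv (f (shift (- int (Suc s) - 1) \<omega>))"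
      by (simp add: shift_shift algebra_simps)
    have h0: "inv (f (shift (- int 0 - 1) \<omega>)) = inv (f (shift (-1) \<omega>))" by simp
    show ?thesis using cmp_front[where H="\<lambda>\<omega> s. inv (f (shift (- int s - 1) \<omega>))" and \<omega>'="shift (-1) \<omega>" and \<omega>=\<omega>, OF h, of x t] h0 by simp
  qed
  finally show ?case .
qed

lemma cd_neg: "circ_dist (- x) (- y) = circ_dist x y"
proof -
  have *: "circ_dist (- x) (- y) \<le> circ_dist x y" for x y
  proof -
    obtain k where "circ_dist x y = \<bar>x - y - of_int k\<bar>" using cd_ex by blast
    moreover have "circ_dist (- x) (- y) \<le> \<bar>- x - - y - of_int (- k)\<bar>" by (rule cd_le)
    ultimately show ?thesis by (simp add: abs_minus_commute)
  qed
  show ?thesis using *[of x y] *[of "-x" "-y"] by simp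
qed

lemma placement:
  fixes b d :: real and T :: nat
  assumes b0: "0 < b"
  shows "\<exists>k. T \<le> k \<and> k \<le> T + nat \<lceil>1/b\<rceil> \<and> circ_dist (real k * b) d \<le> b/2"
proof -
  define z where "z = frac (d - real T * b)"
  have z0: "0 \<le> z" "z < 1" by (auto simp: z_def frac_lt_1)
  define J where "J = \<lfloor>z / b + 1/2\<rfloor>"
  have J0: "0 \<le> J" using z0 b0 by (simp add: J_def)
  have J1: "of_int J \<le> z / b + 1/2" "z / b + 1/2 < of_int J + 1" unfolding J_def
    using of_int_floor_le real_of_int_floor_add_one_gt by blast+
  define j where "j = nat J"
  have jJ: "real j = of_int J" using J0 by (simp add: j_def)
  have "\<bar>real j * b - z\<bar> \<le> b/2"
  proof -
    have "real j - 1/2 \<le> z / b" "z / b \<le> real j + 1/2" using J1 jJ by linarith+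
    then have "(real j - 1/2) * b \<le> z" "z \<le> (real j + 1/2) * b" using b0 by (simp_all add: field_simps)
    then have A: "real j * b - z \<le> b/2" "z - real j * b \<le> b/2" by (simp_all add: algebra_simps)
    then show ?thesis unfolding abs_le_iff by linarith
  qed
  have jK: "j \<le> nat \<lceil>1/b\<rceil>"
  proof -
    have "z / b < 1 / b" using z0 b0 by (simp add: divide_strict_right_mono)
    then have "of_int J < 1/b + 1/2" using J1 by linarith
    moreover have "1/b \<le> of_int \<lceil>1/b\<rceil>" by simp
    ultimately have "J < \<lceil>1/b\<rceil> + 1" by linarith
    then show ?thesis using J0 by (simp add: j_def)
  qed
  have "circ_dist (real (T + j) * b) d = circ_dist (real j * b + real T * b) (d - real T * b + real T * b)"
    by (simp add: algebra_simps)
  also have "\<dots> = circ_dist (real j * b) (d - real T * b)" by (rule cd_translate)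
  also have "\<dots> \<le> \<bar>real j * b - (d - real T * b) - of_int (- \<lfloor>d - real T * b\<rfloor>)\<bar>" by (rule cd_le)
  also have "\<dots> = \<bar>real j * b - z\<bar>" by (simp add: z_def frac_def)
  also have "\<dots> \<le> b/2" by fact
  finally show ?thesis using jK by (intro exI[of _ "T + j"]) auto
qed

definition patval :: "nat \<Rightarrow> (nat \<Rightarrow> nat option) \<Rightarrow> nat \<Rightarrow> nat" where
  "patval P p s = (case p (s div P) of None \<Rightarrow> 0 | Some k \<Rightarrow> if s mod P = k then 1 else 0)"

definition mkword :: "(int \<Rightarrow> nat) \<Rightarrow> nat \<Rightarrow> nat \<Rightarrow> (nat \<Rightarrow> nat option) \<Rightarrow> (nat \<Rightarrow> nat option) \<Rightarrow> int \<Rightarrow> nat" where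
  "mkword w n P pf pb i = (if - int n \<le> i \<and> i < int n then w i
     else if int n \<le> i then patval P pf (nat i - n) else patval P pb (nat (- i - 1) - n))"

lemma patval_eq: "0 < P \<Longrightarrow> i < P \<Longrightarrow> patval P p (j * P + i) = (if p j = Some i then 1 else 0)"
  by (auto simp: patval_def split: option.splits)

lemma mk_f: "0 < P \<Longrightarrow> i < P \<Longrightarrow> mkword w n P pf pb (int (n + j * P + i)) = (if pf j = Some i then 1 else 0)"
proof -
  assume P: "0 < P" "i < P"
  have c2: "int n \<le> int (n + j * P + i)" by (simp only: of_nat_le_iff; simp)
  then have c1: "\<not> (- int n \<le> int (n + j * P + i) \<and> int (n + j * P + i) < int n)" by linarith
  have e: "nat (int (n + j * P + i)) - n = j * P + i" by (simp only: nat_int; simp)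
  show ?thesis unfolding mkword_def using c1 c2 e P by (simp only: if_False if_True) (simp add: patval_eq)
qed

lemma mk_b: "0 < P \<Longrightarrow> i < P \<Longrightarrow> mkword w n P pf pb (- int (n + j * P + i) - 1) = (if pb j = Some i then 1 else 0)"
proof -
  assume P: "0 < P" "i < P"
  have e0: "- (- int (n + j * P + i) - 1) - 1 = int (n + j * P + i)" by simp
  have e: "nat (- (- int (n + j * P + i) - 1) - 1) - n = j * P + i" unfolding e0 by (simp only: nat_int; simp)
  have c0: "int n \<le> int (n + j * P + i)" by (simp only: of_nat_le_iff; simp)
  then have c1: "\<not> (- int n \<le> - int (n + j * P + i) - 1 \<and> - int (n + j * P + i) - 1 < int n)" by linarith
  have c2: "\<not> int n \<le> - int (n + j * P + i) - 1" using c0 by linarith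
  show ?thesis unfolding mkword_def using c1 c2 e P by (simp only: if_False if_True) (simp add: patval_eq)
qed

lemma mk_w: "- int n \<le> i \<Longrightarrow> i < int n \<Longrightarrow> mkword w n P pf pb i = w i"
  by (simp add: mkword_def)

lemma patval01: "patval P p s \<le> Suc 0"
  by (auto simp: patval_def split: option.splits)

lemma mk_sig: "(\<forall>i. - int n \<le> i \<and> i < int n \<longrightarrow> w i \<le> 1) \<Longrightarrow> mkword w n P pf pb \<in> Sigma2"
  unfolding Sigma2_def mkword_def using patval01 by auto

lemma patval_agree:
  assumes "\<forall>j<N. p' j = p j" "s < N * P" "0 < P"
  shows "patval P p' s = patval P p s"
proof -
  have "s div P < N" using assms(2,3) by (simp add: div_less_iff_less_mult)
  then show ?thesis using assms(1) by (simp add: patval_def)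
qed

lemma mk_agree:
  assumes "\<forall>j<N. pf' j = pf j \<and> pb' j = pb j" "0 < P"
    and "- int (n + N * P) \<le> i" "i < int (n + N * P)"
  shows "mkword w n P pf' pb' i = mkword w n P pf pb i"
proof -
  have a1: "\<forall>j<N. pf' j = pf j" "\<forall>j<N. pb' j = pb j" using assms(1) by auto
  show ?thesis
  proof (cases "- int n \<le> i \<and> i < int n")
    case True then show ?thesis by (simp add: mkword_def)
  next
    case False
    show ?thesis
    proof (cases "int n \<le> i")
      case True
      have "nat i - n < N * P" using True assms(4) by linarith
      then show ?thesis using False True patval_agree[OF a1(1) _ assms(2)] by (simp add: mkword_def)
    next
      case F2: False
      have h1: "- i - 1 < int (n + N * P)" using assms(3) by linarith
      have h0: "0 \<le> - i - 1" using F2 False by linarith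
      have "nat (- i - 1) < nat (int (n + N * P))" using nat_less_eq_zless[OF h0] h1 by blast
      then have "nat (- i - 1) < n + N * P" by (simp only: nat_int)
      moreover have "n \<le> nat (- i - 1)" using F2 False by linarith
      ultimately have "nat (- i - 1) - n < N * P" by arith
      then show ?thesis using False F2 patval_agree[OF a1(2) _ assms(2)] by (simp add: mkword_def)
    qed
  qed
qed

lemma cyl_mono:
  assumes "\<forall>i. - int t \<le> i \<and> i < int t \<longrightarrow> \<beta>' i = \<beta> i" "t \<le> t'"
  shows "cylinder t' \<beta>' \<subseteq> cylinder t \<beta>"
  using assms by (auto simp: cylinder_def)

lemma self_cyl: "\<beta> \<in> Sigma2 \<Longrightarrow> \<beta> \<in> cylinder t \<beta>"
  by (simp add: cylinder_def)

lemma zb_gen: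
  fixes u :: "int \<Rightarrow> nat" and lo hi :: int
  assumes hl: "lo + int T \<le> hi"
    and ones: "\<And>p. lo \<le> p \<Longrightarrow> p < hi \<Longrightarrow> u p \<noteq> 0 \<Longrightarrow>
        lo + int T \<le> p \<and> p + int T < hi \<and> (\<forall>q. p < q \<and> q \<le> p + int T \<longrightarrow> u q = 0)"
  shows "zero_blocks_ge T u lo hi"
  unfolding zero_blocks_ge_def
proof (intro allI impI)
  fix i j assume h: "lo \<le> i \<and> i \<le> j \<and> j < hi \<and> (\<forall>k. i \<le> k \<and> k \<le> j \<longrightarrow> u k = 0)
        \<and> (i = lo \<or> u (i - 1) \<noteq> 0) \<and> (j = hi - 1 \<or> u (j + 1) \<noteq> 0)"
  show "int T \<le> j - i + 1"
  proof (cases "i = lo")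
    case True
    show ?thesis
    proof (cases "j = hi - 1")
      case True then show ?thesis using \<open>i = lo\<close> hl by simp
    next
      case False
      then have u1: "u (j + 1) \<noteq> 0" using h by auto
      have "j + 1 < hi" using h False by auto
      then have "lo + int T \<le> j + 1" using ones[of "j + 1"] u1 h by auto
      then show ?thesis using \<open>i = lo\<close> by simp
    qed
  next
    case False
    then have u1: "u (i - 1) \<noteq> 0" using h by auto
    have "lo \<le> i - 1" "i - 1 < hi" using h False by auto
    then have o: "i - 1 + int T < hi" "\<forall>q. i - 1 < q \<and> q \<le> i - 1 + int T \<longrightarrow> u q = 0"
      using ones[of "i - 1"] u1 by auto
    show ?thesis
    proof (rule ccontr)
      assume "\<not> int T \<le> j - i + 1"
      then have jl: "j + 1 \<le> i - 1 + int T" by simp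
      show False
      proof (cases "j = hi - 1")
        case True then show False using jl o(1) by simp
      next
        case F: False
        then have "u (j + 1) \<noteq> 0" using h by auto
        moreover have "u (j + 1) = 0" using o(2) jl h by auto
        ultimately show False by simp
      qed
    qed
  qed
qed

lemma decomp_f:
  assumes "int n \<le> p" "p < int (n + N * P)" "0 < P"
  shows "\<exists>j k. j < N \<and> k < P \<and> p = int (n + j * P + k)"
proof -
  define s where "s = nat p - n"
  have ps: "p = int (n + s)" using assms(1) by (simp add: s_def)
  have p0: "0 \<le> p" using assms(1) by linarith
  have "nat p < nat (int (n + N * P))" using nat_less_eq_zless[OF p0] assms(2) by blast
  then have "nat p < n + N * P" by (simp only: nat_int)
  moreover have "n \<le> nat p" using assms(1) by linarith
  ultimately have sN: "s < N * P" unfolding s_def by linarith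
  have e: "n + s = n + s div P * P + s mod P" by simp
  have "s div P < N" using sN assms(3) by (simp add: div_less_iff_less_mult)
  moreover have "s mod P < P" using assms(3) by simp
  moreover have "p = int (n + s div P * P + s mod P)" using ps e by simp
  ultimately show ?thesis by blast
qed

lemma decomp_b:
  assumes "- int (n + N * P) \<le> p" "p < - int n" "0 < P"
  shows "\<exists>j k. j < N \<and> k < P \<and> p = - int (n + j * P + k) - 1"
proof -
  have "int n \<le> - p - 1" "- p - 1 < int (n + N * P)" using assms by linarith+
  then obtain j k where "j < N" "k < P" "- p - 1 = int (n + j * P + k)" using decomp_f[OF _ _ assms(3)] by blast
  then show ?thesis by (intro exI[of _ j] exI[of _ k]) simp
qed

definition validp :: "nat \<Rightarrow> nat \<Rightarrow> nat option \<Rightarrow> bool" where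
  "validp T P p \<longleftrightarrow> p = None \<or> (\<exists>k. p = Some k \<and> T \<le> k \<and> k + T < P)"

lemma zb_fwd:
  assumes P: "0 < P" "T < P" and N: "1 \<le> N" and v: "\<forall>j<N. validp T P (pf j)"
  shows "zero_blocks_ge T (mkword w n P pf pb) (int n) (int (n + N * P))"
proof (rule zb_gen)
  have "T \<le> N * P" using P N by (metis le_trans less_imp_le mult_1 mult_le_mono1)
  then have h: "int T \<le> int (N * P)" by (simp only: of_nat_le_iff)
  show "int n + int T \<le> int (n + N * P)" using h by simp
next
  fix p assume p: "int n \<le> p" "p < int (n + N * P)" "mkword w n P pf pb p \<noteq> 0"
  obtain j k where jk: "j < N" "k < P" "p = int (n + j * P + k)" using decomp_f[OF p(1,2) P(1)] by blast
  have pj: "pf j = Some k" using p(3) mk_f[OF P(1) jk(2), of w n pf pb j] jk(3) by (auto split: if_splits)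
  have kT: "T \<le> k" "k + T < P" using v jk(1) pj by (auto simp: validp_def)
  have jp: "0 \<le> int j * int P" by simp
  have Tk: "int T \<le> int k" using kT(1) by simp
  have A: "int n + int T \<le> p" using jk(3) jp Tk by (simp only: of_nat_add of_nat_mult; linarith)
  have "n + j * P + k + T < n + (j + 1) * P" using kT by simp
  also have "\<dots> \<le> n + N * P" using jk(1) by (simp add: mult_le_mono1 del: mult_Suc)
  finally have B: "p + int T < int (n + N * P)" using jk(3) by linarith
  have C: "mkword w n P pf pb q = 0" if q: "p < q" "q \<le> p + int T" for q
  proof -
    define d where "d = nat (q - p)"
    have d: "q = int (n + j * P + (k + d))" "0 < d" "d \<le> T" using q jk(3) by (auto simp: d_def)
    have kd: "k + d < P" using d kT by simp
    have "mkword w n P pf pb q = (if pf j = Some (k + d) then 1 else 0)" unfolding d(1) by (rule mk_f[OF P(1) kd])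
    then show ?thesis using pj d by simp
  qed
  show "int n + int T \<le> p \<and> p + int T < int (n + N * P) \<and> (\<forall>q. p < q \<and> q \<le> p + int T \<longrightarrow> mkword w n P pf pb q = 0)"
    using A B C by blast
qed

lemma zb_bwd:
  assumes P: "0 < P" "T < P" and N: "1 \<le> N" and v: "\<forall>j<N. validp T P (pb j)" and T0: "0 < T"
  shows "zero_blocks_ge T (mkword w n P pf pb) (- int (n + N * P)) (- int n)"
proof (rule zb_gen)
  have "T \<le> N * P" using P N by (metis le_trans less_imp_le mult_1 mult_le_mono1)
  then have h: "int T \<le> int (N * P)" by (simp only: of_nat_le_iff)
  show "- int (n + N * P) + int T \<le> - int n" using h by simp
next
  fix p assume p: "- int (n + N * P) \<le> p" "p < - int n" "mkword w n P pf pb p \<noteq> 0"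
  obtain j k where jk: "j < N" "k < P" "p = - int (n + j * P + k) - 1" using decomp_b[OF p(1,2) P(1)] by blast
  have pj: "pb j = Some k" using p(3) mk_b[OF P(1) jk(2), of w n pf pb j] jk(3) by (auto split: if_splits)
  have kT: "T \<le> k" "k + T < P" using v jk(1) pj by (auto simp: validp_def)
  have "n + j * P + k + T < n + (j + 1) * P" using kT by simp
  also have "\<dots> \<le> n + N * P" using jk(1) by (simp add: mult_le_mono1 del: mult_Suc)
  finally have A: "- int (n + N * P) + int T \<le> p" using jk(3) by linarith
  have jp: "0 \<le> int j * int P" by simp
  have Tk: "int T \<le> int k" using kT(1) by simp
  have B: "p + int T < - int n" using jk(3) jp Tk T0 by (simp only: of_nat_add of_nat_mult; linarith)
  have C: "mkword w n P pf pb q = 0" if q: "p < q" "q \<le> p + int T" for q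
  proof -
    define d where "d = nat (q - p)"
    have d0: "0 < d" "d \<le> T" using q by (auto simp: d_def)
    then have dk: "d \<le> k" using kT by simp
    have "q = p + int d" using q by (simp add: d_def)
    then have qd: "q = - int (n + j * P + (k - d)) - 1" using jk(3) dk by simp
    have kd: "k - d < P" using jk(2) by simp
    have "mkword w n P pf pb q = (if pb j = Some (k - d) then 1 else 0)" unfolding qd by (rule mk_b[OF P(1) kd])
    then show ?thesis using pj d0 dk by simp
  qed
  show "- int (n + N * P) + int T \<le> p \<and> p + int T < - int n \<and> (\<forall>q. p < q \<and> q \<le> p + int T \<longrightarrow> mkword w n P pf pb q = 0)"
    using A B C by blast
qed

context side
begin

lemma cyl_sym:
  assumes "\<omega> \<in> cylinder (t + P) \<beta>'" "i < P"
  shows "\<omega> (pos (t + i)) = \<beta>' (pos (t + i))"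
proof -
  have "t + i < t + P" using assms(2) by simp
  then show ?thesis using assms(1) pos_rng[of "t + i" "t + P"] by (simp add: cylinder_def)
qed

lemma step_none:
  assumes om: "\<omega> \<in> cylinder (t + P) \<beta>'" and z: "\<And>i. i < P \<Longrightarrow> \<beta>' (pos (t + i)) = 0"
  shows "(1 - \<eta>) ^ P * circ_dist (X \<omega> x t) (X \<omega> y t) \<le> circ_dist (X \<omega> x (t + P)) (X \<omega> y (t + P))"
proof (rule neutral_cycle)
  show "\<omega> \<in> Sigma2" using om by (simp add: cylinder_def)
  fix i assume "i < P" then show "\<omega> (pos (t + i)) = 0" using cyl_sym[OF om] z by simp
qed

lemma step_some:
  assumes om: "\<omega> \<in> cylinder (t + P) \<beta>'" and kP: "k < P"
    and sy: "\<And>i. i < P \<Longrightarrow> \<beta>' (pos (t + i)) = (if i = k then 1 else 0)"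
    and ref: "circ_dist (X \<omega> x t) xr \<le> eps" and pl: "circ_dist (xr + real k * \<rho>) e \<le> bh"
    and S: "circ_dist (X \<omega> x t) (X \<omega> y t) \<le> S"
    and num: "bh + eps + real k * \<delta> + (1 + \<eta>) ^ k * S < 3/100" and lam0: "0 \<le> lam"
  shows "lam * (1 - \<eta>) ^ (P - 1) * circ_dist (X \<omega> x t) (X \<omega> y t) \<le> circ_dist (X \<omega> x (t + P)) (X \<omega> y (t + P))"
proof (rule expand_cycle[OF _ kP _ _ lam0])
  show "\<omega> \<in> Sigma2" using om by (simp add: cylinder_def)
  fix i assume "i < P" then show "\<omega> (pos (t + i)) = (if i = k then 1 else 0)" using cyl_sym[OF om] sy by simp
next
  have "circ_dist (X \<omega> x t + real k * \<rho>) e \<le> circ_dist (X \<omega> x t + real k * \<rho>) (xr + real k * \<rho>) + circ_dist (xr + real k * \<rho>) e"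
    by (rule cd_triangle)
  also have "circ_dist (X \<omega> x t + real k * \<rho>) (xr + real k * \<rho>) = circ_dist (X \<omega> x t) xr" by (rule cd_translate)
  finally have a: "circ_dist (X \<omega> x t + real k * \<rho>) e \<le> eps + bh" using ref pl by linarith
  have "(1 + \<eta>) ^ k * circ_dist (X \<omega> x t) (X \<omega> y t) \<le> (1 + \<eta>) ^ k * S" using S eta0 by (intro mult_left_mono) auto
  then show "circ_dist (X \<omega> x t + real k * \<rho>) e + real k * \<delta> + (1 + \<eta>) ^ k * circ_dist (X \<omega> x t) (X \<omega> y t) < 3/100"
    using a num by linarith
qed

end


locale mainctx = ctx +
  fixes T P K0 I :: nat and c r \<epsilon> s1 lamc :: real
  assumes T0: "0 < T" and bpos: "0 < b" and bsmall: "b < 1/100"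
    and K0: "K0 = nat \<lceil>1/b\<rceil>"
    and PT: "2*T + K0 + 1 \<le> P"
    and cdef: "c = 2 powr (\<alpha>/4)" and Gc: "G \<le> c ^ P" and rdef: "r = (c ^ P)\<^sup>2"
    and dc: "1 + 2*\<delta> \<le> c"
    and eps: "\<epsilon> = 1/10000" and s1: "s1 = 2*b + 1/1000"
    and head: "real I * (r ^ I * (real P * (2/\<mu> * \<delta>))) \<le> \<epsilon>/3"
    and tail: "real P * (C/\<mu>) * r\<^sup>2 * (1/2) ^ I \<le> \<epsilon>/3"
    and lamc: "lamc = (1+a)/2" "lamc \<le> a - \<delta>" "lamc \<le> 1/(1/a + \<delta>)"
    and d5: "1 < lamc * (1 - 2*\<delta>) ^ P"
    and d6: "b/2 + \<epsilon> + real (T+K0) * \<delta> + (1+2*\<delta>) ^ (T+K0) * (s1 + 2*\<epsilon>) < 3/100"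
    and d7: "2*b \<le> (1-2*\<delta>) ^ P * (s1 - 2*\<epsilon>) - \<epsilon>"

sublocale mainctx \<subseteq> F: side "\<lambda>\<omega> s. f (shift (int s) \<omega>)" int G b 0 \<delta> "2*\<delta>" "a - \<delta>" "2/\<mu>" "C/\<mu>" "2 powr (-\<alpha>)"
  by (rule fwd_side)

sublocale mainctx \<subseteq> B: side "\<lambda>\<omega> s. inv (f (shift (- int s - 1) \<omega>))" "\<lambda>s. - int s - 1" G "-b" "1/2" \<delta> "2*\<delta>" "1 / (1/a + \<delta>)" "2/\<mu>" "C/\<mu>" "2 powr (-\<alpha>)"
  by (rule bwd_side)

context mainctx
begin

lemma P_facts: "0 < P" "T < P" "\<And>k. k \<le> T + K0 \<Longrightarrow> k + T < P"
  using PT T0 by auto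

lemma c_facts: "1 < c" "1 \<le> c ^ P"
proof -
  have "2 powr 0 < 2 powr (\<alpha>/4)" using a0 by (intro powr_less_mono) auto
  then show c1: "1 < c" using cdef by simp
  then show "1 \<le> c ^ P" by (simp add: one_le_power)
qed

lemma r_facts: "2 \<le> r" "(2 powr (-\<alpha>)) ^ P = 1 / r\<^sup>2" "0 \<le> G * (1 + 2*\<delta>) ^ P" "G * (1 + 2*\<delta>) ^ P \<le> r"
proof -
  have cP: "c ^ P = 2 powr (\<alpha>/4 * real P)"
    using cdef by (simp add: powr_realpow[symmetric] powr_powr)
  have "2 \<le> c ^ P" using Gc GG by linarith
  then have "2 * 2 \<le> c ^ P * c ^ P" by (intro mult_mono) auto
  then show "2 \<le> r" using rdef by (simp add: power2_eq_square)
  have "r\<^sup>2 = 2 powr (\<alpha> * real P)"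
  proof -
    have "r\<^sup>2 = (c ^ P) ^ 4" using rdef by (simp add: power_mult[symmetric] mult.commute)
    also have "\<dots> = 2 powr (\<alpha>/4 * real P * 4)" unfolding cP by (simp add: powr_realpow[symmetric] powr_powr)
    finally show ?thesis by simp
  qed
  moreover have "(2 powr (-\<alpha>)) ^ P = 2 powr (- (\<alpha> * real P))" by (simp add: powr_realpow[symmetric] powr_powr)
  ultimately show "(2 powr (-\<alpha>)) ^ P = 1 / r\<^sup>2" by (simp add: powr_minus divide_inverse)
  show "0 \<le> G * (1 + 2*\<delta>) ^ P" using GG del by simp
  have "(1 + 2*\<delta>) ^ P \<le> c ^ P" using dc del by (intro power_mono) auto
  then have "G * (1 + 2*\<delta>) ^ P \<le> c ^ P * c ^ P" using Gc GG del by (intro mult_mono) auto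
  then show "G * (1 + 2*\<delta>) ^ P \<le> r" using rdef by (simp add: power2_eq_square)
qed

lemma npad_ex: "\<exists>N0. \<forall>N\<ge>N0. G ^ n * real n * (C/\<mu>) * (1/r) ^ N \<le> \<epsilon>/3"
proof -
  define K where "K = G ^ n * real n * (C/\<mu>)"
  have K0': "0 \<le> K" using GG C0 mu0 by (simp add: K_def)
  have r2: "2 \<le> r" by (rule r_facts(1))
  have "\<epsilon>/3 / (K + 1) > 0" using K0' eps by simp
  moreover have "1/r < 1" using r2 by simp
  ultimately obtain N0 where N0: "(1/r) ^ N0 < \<epsilon>/3 / (K + 1)" using real_arch_pow_inv by blast
  have "K * (1/r) ^ N \<le> \<epsilon>/3" if "N \<ge> N0" for N
  proof -
    have "(1/r) ^ N \<le> (1/r) ^ N0" using that r2 by (intro power_decreasing) auto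
    then have "(1/r) ^ N \<le> \<epsilon>/3 / (K + 1)" using N0 by linarith
    then have "(K + 1) * (1/r) ^ N \<le> \<epsilon>/3" using K0' by (simp add: field_simps)
    moreover have "K * (1/r) ^ N \<le> (K + 1) * (1/r) ^ N" using r2 by (intro mult_right_mono) auto
    ultimately show ?thesis by linarith
  qed
  then show ?thesis unfolding K_def by blast
qed

lemma width_ok:
  assumes Np: "G ^ n * real n * (C/\<mu>) * (1/r) ^ N \<le> \<epsilon>/3"
    and om: "\<omega> \<in> cylinder (n + N * P) (mkword w n P pf pb)" "\<omega>' \<in> cylinder (n + N * P) (mkword w n P pf pb)"
  shows "circ_dist (F.X \<omega> x (n + N * P)) (F.X \<omega>' x (n + N * P)) \<le> \<epsilon>"
    and "circ_dist (B.X \<omega> x (n + N * P)) (B.X \<omega>' x (n + N * P)) \<le> \<epsilon>"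
proof -
  have P0: "0 < P" by (rule P_facts(1))
  define \<Gamma> where "\<Gamma> = G * (1 + 2*\<delta>) ^ P"
  define kP where "kP = (2 powr (-\<alpha>)) ^ P"
  have kPN: "(2 powr (-\<alpha>)) ^ (N * P) = kP ^ N" by (simp add: kP_def power_mult[symmetric] mult.commute)
  have kp: "0 \<le> kP" "kP \<le> 1 / r\<^sup>2" using r_facts(2) by (auto simp: kP_def)
  have num: "\<Gamma> ^ N * (G ^ n * (real n * (C/\<mu> * kP ^ N)))
     + (\<Sum>j<N. \<Gamma> ^ (N - 1 - j) * (\<Gamma> * (real P * min (2/\<mu> * \<delta>) (C/\<mu> * kP ^ (N - 1 - j)))))
     \<le> \<epsilon>"
  proof -
    have "\<Gamma> ^ N * (G ^ n * (real n * (C/\<mu> * kP ^ N)))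
     + (\<Sum>j<N. \<Gamma> ^ (N - 1 - j) * (\<Gamma> * (real P * min (2/\<mu> * \<delta>) (C/\<mu> * kP ^ (N - 1 - j)))))
     \<le> G ^ n * real n * (C/\<mu>) * (1 / r) ^ N + (real I * (r ^ I * (real P * (2/\<mu> * \<delta>))) + (real P * (C/\<mu>) * r ^ 2) * (1/2) ^ I)"
      by (rule width_num[OF r_facts(1) _ _ kp]) (use r_facts(3,4) GG mu0 C0 del in \<open>auto simp: \<Gamma>_def\<close>)
    also have "\<dots> \<le> \<epsilon>/3 + (\<epsilon>/3 + \<epsilon>/3)" using Np head tail by linarith
    finally show ?thesis by simp
  qed
  show "circ_dist (F.X \<omega> x (n + N * P)) (F.X \<omega>' x (n + N * P)) \<le> \<epsilon>"
  proof -
    have fmt: "\<And>j i. j < N \<Longrightarrow> i < P \<Longrightarrow> mkword w n P pf pb (int (n + j * P + i)) = (if pf j = Some i then 1 else 0)"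
      using mk_f[OF P0] by blast
    have "circ_dist (F.X \<omega> x (n + N * P)) (F.X \<omega>' x (n + N * P)) \<le> \<Gamma> ^ N * (G ^ n * (real n * (C/\<mu> * (2 powr (-\<alpha>)) ^ (N * P))))
     + (\<Sum>j<N. \<Gamma> ^ (N - 1 - j) * (\<Gamma> * (real P * min (2/\<mu> * \<delta>) (C/\<mu> * ((2 powr (-\<alpha>)) ^ P) ^ (N - 1 - j)))))"
      unfolding \<Gamma>_def by (rule F.width[OF om fmt])
    then show ?thesis using num unfolding kPN kP_def by linarith
  qed
  show "circ_dist (B.X \<omega> x (n + N * P)) (B.X \<omega>' x (n + N * P)) \<le> \<epsilon>"
  proof -
    have fmt: "\<And>j i. j < N \<Longrightarrow> i < P \<Longrightarrow> mkword w n P pf pb (- int (n + j * P + i) - 1) = (if pb j = Some i then 1 else 0)"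
      using mk_b[OF P0] by blast
    have "circ_dist (B.X \<omega> x (n + N * P)) (B.X \<omega>' x (n + N * P)) \<le> \<Gamma> ^ N * (G ^ n * (real n * (C/\<mu> * (2 powr (-\<alpha>)) ^ (N * P))))
     + (\<Sum>j<N. \<Gamma> ^ (N - 1 - j) * (\<Gamma> * (real P * min (2/\<mu> * \<delta>) (C/\<mu> * ((2 powr (-\<alpha>)) ^ P) ^ (N - 1 - j)))))"
      unfolding \<Gamma>_def by (rule B.width[OF om fmt])
    then show ?thesis using num unfolding kPN kP_def by linarith
  qed
qed

lemma bnd_step:
  fixes lam slow s0 x :: real
  assumes "1 \<le> lam" "0 \<le> x" "min slow (s0 * lam ^ k) \<le> x" "0 \<le> slow"
  shows "min slow (s0 * lam ^ Suc k) \<le> lam * x"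
proof -
  have "min slow (s0 * lam ^ Suc k) \<le> lam * min slow (s0 * lam ^ k)"
  proof (cases "slow \<le> s0 * lam ^ k")
    case True
    then have m: "min slow (s0 * lam ^ k) = slow" by simp
    have "slow \<le> lam * slow" using assms(1,4) by (simp add: mult_le_cancel_right1)
    then show ?thesis unfolding m by linarith
  next
    case False
    then have "min slow (s0 * lam ^ k) = s0 * lam ^ k" by simp
    moreover have "s0 * lam ^ Suc k = lam * (s0 * lam ^ k)" by (simp add: algebra_simps)
    moreover have "min slow (s0 * lam ^ Suc k) \<le> s0 * lam ^ Suc k" by simp
    ultimately show ?thesis by metis
  qed
  also have "\<dots> \<le> lam * x" using assms by (intro mult_left_mono) auto
  finally show ?thesis .
qed

lemma main:
  assumes w01: "\<forall>i. - int n \<le> i \<and> i < int n \<longrightarrow> w i \<le> 1" and fr: "frac \<phi>1 \<noteq> frac \<phi>2"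
  shows "\<exists>m \<beta>. n \<le> m
           \<and> (\<forall>i. - int m \<le> i \<and> i < int m \<longrightarrow> \<beta> i \<le> 1)
           \<and> (\<forall>i. - int n \<le> i \<and> i < int n \<longrightarrow> \<beta> i = w i)
           \<and> zero_blocks_ge T \<beta> (- int m) (- int n)
           \<and> zero_blocks_ge T \<beta> (int n) (int m)
           \<and> set_circ_dist (Vplus f m \<beta> \<phi>1) (Vplus f m \<beta> \<phi>2) \<ge> 2 * b
           \<and> set_circ_dist (Vminus f m \<beta> \<phi>1) (Vminus f m \<beta> \<phi>2) \<ge> 2 * b"
proof -
  have P0: "0 < P" and TP: "T < P" and kv: "\<And>k. k \<le> T + K0 \<Longrightarrow> k + T < P" using P_facts by auto
  obtain Npad where Np: "\<And>N. N \<ge> Npad \<Longrightarrow> G ^ n * real n * (C/\<mu>) * (1/r) ^ N \<le> \<epsilon>/3" using npad_ex by blast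
  define \<eta> where "\<eta> = 2 * \<delta>"
  have eta: "0 \<le> \<eta>" "\<eta> \<le> 1/5" "0 \<le> 1 - \<eta>" "1 - \<eta> \<le> 1" using del by (auto simp: \<eta>_def)
  define sinit where "sinit = circ_dist \<phi>1 \<phi>2 / G ^ n"
  have sinit0: "0 < sinit" using cd_pos[OF fr] GG by (simp add: sinit_def)
  define lam where "lam = lamc * (1 - \<eta>) ^ P"
  have lam1: "1 < lam" using d5 by (simp add: lam_def \<eta>_def)
  define slow where "slow = (1 - \<eta>) ^ P * (s1 - 2 * \<epsilon>)"
  have slow0: "0 \<le> slow" using eta s1 eps bpos by (simp add: slow_def)
  define s0 where "s0 = sinit * (1 - \<eta>) ^ (P * Npad)"
  define bnd where "bnd N = (if N < Npad then sinit * (1 - \<eta>) ^ (P * N) else min slow (s0 * lam ^ (N - Npad)))" for N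
  define sepF where "sepF \<omega> t = circ_dist (F.X \<omega> \<phi>1 t) (F.X \<omega> \<phi>2 t)" for \<omega> t
  define sepB where "sepB \<omega> t = circ_dist (B.X \<omega> \<phi>1 t) (B.X \<omega> \<phi>2 t)" for \<omega> t
  define Inv where "Inv N pf pb \<longleftrightarrow> (\<forall>j<N. validp T P (pf j) \<and> validp T P (pb j))
      \<and> (\<forall>\<omega> \<in> cylinder (n + N * P) (mkword w n P pf pb). bnd N \<le> sepF \<omega> (n + N * P) \<and> bnd N \<le> sepB \<omega> (n + N * P))" for N pf pb
  have sig: "mkword w n P pf pb \<in> Sigma2" for pf pb using mk_sig[OF w01] .
  have base: "Inv 0 (\<lambda>_. None) (\<lambda>_. None)"
  proof -
    have b0: "bnd 0 \<le> sinit" by (simp add: bnd_def s0_def)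
    have "bnd 0 \<le> sepF \<omega> n \<and> bnd 0 \<le> sepB \<omega> n" if om: "\<omega> \<in> cylinder n (mkword w n P (\<lambda>_. None) (\<lambda>_. None))" for \<omega>
    proof -
      have o: "\<omega> \<in> Sigma2" using om by (simp add: cylinder_def)
      have "circ_dist \<phi>1 \<phi>2 \<le> G ^ n * sepF \<omega> n" unfolding sepF_def by (rule F.colip_comp[OF o])
      then have "sinit \<le> sepF \<omega> n" using GG by (simp add: sinit_def field_simps)
      moreover have "circ_dist \<phi>1 \<phi>2 \<le> G ^ n * sepB \<omega> n" unfolding sepB_def by (rule B.colip_comp[OF o])
      then have "sinit \<le> sepB \<omega> n" using GG by (simp add: sinit_def field_simps)
      ultimately show ?thesis using b0 by linarith
    qed
    then show ?thesis by (simp add: Inv_def)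
  qed
  have step: "\<exists>pf' pb'. Inv (Suc N) pf' pb'" if IH: "Inv N pf pb" for N pf pb
  proof -
    define t where "t = n + N * P"
    define \<beta> where "\<beta> = mkword w n P pf pb"
    have \<beta>s: "\<beta> \<in> Sigma2" by (simp add: \<beta>_def sig)
    have \<beta>c: "\<beta> \<in> cylinder t \<beta>" using \<beta>s by (rule self_cyl)
    define xF where "xF = F.X \<beta> \<phi>1 t"
    define yF where "yF = F.X \<beta> \<phi>2 t"
    define xB where "xB = B.X \<beta> \<phi>1 t"
    define yB where "yB = B.X \<beta> \<phi>2 t"
    obtain kF where kF: "T \<le> kF" "kF \<le> T + K0" "circ_dist (real kF * b) (- xF) \<le> b/2"
      using placement[OF bpos, of T "- xF"] K0 by blast
    obtain kB where kB: "T \<le> kB" "kB \<le> T + K0" "circ_dist (real kB * b) (xB - 1/2) \<le> b/2"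
      using placement[OF bpos, of T "xB - 1/2"] K0 by blast
    have plF: "circ_dist (xF + real kF * b) 0 \<le> b/2"
    proof -
      have "circ_dist (xF + real kF * b) 0 = circ_dist (real kF * b + xF) (- xF + xF)" by (simp add: add.commute)
      also have "\<dots> = circ_dist (real kF * b) (- xF)" by (rule cd_translate)
      finally show ?thesis using kF(3) by simp
    qed
    have plB: "circ_dist (xB + real kB * - b) (1/2) \<le> b/2"
    proof -
      have "circ_dist (xB + real kB * - b) (1/2) = circ_dist (- (real kB * b) + xB) ((1/2 - xB) + xB)" by simp
      also have "\<dots> = circ_dist (- (real kB * b)) (- (xB - 1/2))" by (simp only: cd_translate) simp
      also have "\<dots> = circ_dist (real kB * b) (xB - 1/2)" by (rule cd_neg)
      finally show ?thesis using kB(3) by simp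
    qed
    define cF where "cF = (if N < Npad then None else if circ_dist xF yF < s1 then Some kF else None)"
    define cB where "cB = (if N < Npad then None else if circ_dist xB yB < s1 then Some kB else None)"
    define pf' where "pf' = pf(N := cF)"
    define pb' where "pb' = pb(N := cB)"
    define \<beta>' where "\<beta>' = mkword w n P pf' pb'"
    have vF: "validp T P cF" using kF kv by (auto simp: cF_def validp_def)
    have vB: "validp T P cB" using kB kv by (auto simp: cB_def validp_def)
    have agr: "\<forall>j<N. pf' j = pf j \<and> pb' j = pb j" by (simp add: pf'_def pb'_def)
    have ag\<beta>: "\<forall>i. - int t \<le> i \<and> i < int t \<longrightarrow> \<beta>' i = \<beta> i"
      using mk_agree[OF agr P0] by (simp add: \<beta>'_def \<beta>_def t_def)
    have tP: "n + Suc N * P = t + P" by (simp add: t_def)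
    have cylsub: "cylinder (t + P) \<beta>' \<subseteq> cylinder t \<beta>" by (rule cyl_mono[OF ag\<beta>]) simp
    have symF: "\<beta>' (int (t + i)) = (if cF = Some i then 1 else 0)" if "i < P" for i
      using mk_f[OF P0 that, of w n pf' pb' N] by (simp add: \<beta>'_def t_def pf'_def)
    have symB: "\<beta>' (- int (t + i) - 1) = (if cB = Some i then 1 else 0)" if "i < P" for i
      using mk_b[OF P0 that, of w n pf' pb' N] by (simp add: \<beta>'_def t_def pb'_def)
    have IHb: "bnd N \<le> sepF \<omega> t \<and> bnd N \<le> sepB \<omega> t" if "\<omega> \<in> cylinder t \<beta>" for \<omega>
      using IH that by (simp add: Inv_def t_def \<beta>_def)
    have wid: "circ_dist (F.X \<omega> x t) (F.X \<omega>' x t) \<le> \<epsilon> \<and> circ_dist (B.X \<omega> x t) (B.X \<omega>' x t) \<le> \<epsilon>"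
      if "Npad \<le> N" "\<omega> \<in> cylinder t \<beta>" "\<omega>' \<in> cylinder t \<beta>" for \<omega> \<omega>' x
      using width_ok[OF Np[OF that(1)]] that(2,3) by (simp add: t_def \<beta>_def)
    have bndpre: "bnd (Suc N) \<le> (1 - \<eta>) ^ P * bnd N" if "N < Npad"
    proof (cases "Suc N < Npad")
      case True
      then show ?thesis using that by (simp add: bnd_def power_add mult.commute mult.left_commute)
    next
      case False
      then have "Npad = Suc N" using that by simp
      then have "bnd (Suc N) \<le> s0" by (simp add: bnd_def)
      also have "s0 = (1 - \<eta>) ^ P * bnd N" using that \<open>Npad = Suc N\<close> by (simp add: bnd_def s0_def power_add mult.commute mult.left_commute)
      finally show ?thesis .
    qed
    have bndpost: "bnd (Suc N) \<le> slow" if "Npad \<le> N" using that by (simp add: bnd_def)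
    have bndlam: "bnd (Suc N) \<le> lam * x" if "Npad \<le> N" "bnd N \<le> x" "0 \<le> x" for x
    proof -
      have e: "Suc N - Npad = Suc (N - Npad)" using that(1) by simp
      have "min slow (s0 * lam ^ Suc (N - Npad)) \<le> lam * x"
        by (rule bnd_step) (use lam1 that slow0 in \<open>auto simp: bnd_def\<close>)
      then show ?thesis using that(1) e by (simp add: bnd_def)
    qed
    have lamle: "lam * z \<le> l * (1 - \<eta>) ^ (P - 1) * z" if "lamc \<le> l" "0 \<le> z" for l z
    proof -
      have "(1 - \<eta>) ^ P \<le> (1 - \<eta>) ^ (P - 1)" using eta by (intro power_decreasing) auto
      moreover have "0 \<le> lamc" using lamc ha by simp
      ultimately have "lamc * (1 - \<eta>) ^ P \<le> l * (1 - \<eta>) ^ (P - 1)" using that eta by (intro mult_mono) auto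
      then show ?thesis unfolding lam_def using that(2) by (intro mult_right_mono) auto
    qed
    have num: "b/2 + \<epsilon> + real k * \<delta> + (1 + \<eta>) ^ k * (s1 + 2 * \<epsilon>) < 3/100" if "k \<le> T + K0" for k
    proof -
      have "real k * \<delta> \<le> real (T + K0) * \<delta>" using that del by (intro mult_right_mono) auto
      moreover have "(1 + \<eta>) ^ k \<le> (1 + \<eta>) ^ (T + K0)" using that eta by (intro power_increasing) auto
      then have "(1 + \<eta>) ^ k * (s1 + 2 * \<epsilon>) \<le> (1 + \<eta>) ^ (T + K0) * (s1 + 2 * \<epsilon>)"
        using s1 eps bpos by (intro mult_right_mono) auto
      ultimately show ?thesis using d6 by (simp add: \<eta>_def)
    qed
    have goodF: "bnd (Suc N) \<le> sepF \<omega> (t + P)" if om: "\<omega> \<in> cylinder (t + P) \<beta>'" for \<omega>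
    proof -
      have omt: "\<omega> \<in> cylinder t \<beta>" using om cylsub by blast
      have ib: "bnd N \<le> sepF \<omega> t" using IHb[OF omt] by simp
      have sp0: "0 \<le> sepF \<omega> t" by (simp add: sepF_def cd_nonneg)
      show ?thesis
      proof (cases "cF = None")
        case True
        have z: "\<beta>' (int (t + i)) = 0" if "i < P" for i using symF[OF that] True by simp
        have st: "(1 - \<eta>) ^ P * sepF \<omega> t \<le> sepF \<omega> (t + P)"
          using F.step_none[OF om z] by (simp add: sepF_def \<eta>_def)
        show ?thesis
        proof (cases "N < Npad")
          case True
          have "bnd (Suc N) \<le> (1 - \<eta>) ^ P * bnd N" using bndpre[OF True] .
          also have "\<dots> \<le> (1 - \<eta>) ^ P * sepF \<omega> t" using ib eta by (intro mult_left_mono) auto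
          finally show ?thesis using st by linarith
        next
          case False
          then have ref: "\<not> circ_dist xF yF < s1" using \<open>cF = None\<close> by (auto simp: cF_def split: if_splits)
          have w1: "circ_dist (F.X \<omega> \<phi>1 t) xF \<le> \<epsilon>" "circ_dist (F.X \<omega> \<phi>2 t) yF \<le> \<epsilon>"
            using wid[OF _ omt \<beta>c] False by (auto simp: xF_def yF_def)
          have "circ_dist xF yF \<le> circ_dist xF (F.X \<omega> \<phi>1 t) + circ_dist (F.X \<omega> \<phi>1 t) yF" by (rule cd_triangle)
          also have "circ_dist (F.X \<omega> \<phi>1 t) yF \<le> sepF \<omega> t + circ_dist (F.X \<omega> \<phi>2 t) yF"
            unfolding sepF_def by (rule cd_triangle)
          finally have "s1 - 2 * \<epsilon> \<le> sepF \<omega> t" using ref w1 cd_sym[of xF "F.X \<omega> \<phi>1 t"] by linarith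
          then have "slow \<le> (1 - \<eta>) ^ P * sepF \<omega> t" unfolding slow_def using eta by (intro mult_left_mono) auto
          then show ?thesis using st bndpost False by linarith
        qed
      next
        case False
        then have cs: "cF = Some kF" "Npad \<le> N" "circ_dist xF yF < s1" by (auto simp: cF_def split: if_splits)
        have kP: "kF < P" using kv[OF kF(2)] by simp
        have sy: "\<beta>' (int (t + i)) = (if i = kF then 1 else 0)" if "i < P" for i using symF[OF that] cs(1) by auto
        have w1: "circ_dist (F.X \<omega> \<phi>1 t) xF \<le> \<epsilon>" "circ_dist (F.X \<omega> \<phi>2 t) yF \<le> \<epsilon>"
          using wid[OF cs(2) omt \<beta>c] by (auto simp: xF_def yF_def)
        have S: "sepF \<omega> t \<le> s1 + 2 * \<epsilon>"
        proof -
          have "sepF \<omega> t \<le> circ_dist (F.X \<omega> \<phi>1 t) xF + circ_dist xF (F.X \<omega> \<phi>2 t)" unfolding sepF_def by (rule cd_triangle)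
          also have "circ_dist xF (F.X \<omega> \<phi>2 t) \<le> circ_dist xF yF + circ_dist yF (F.X \<omega> \<phi>2 t)" by (rule cd_triangle)
          finally show ?thesis using w1 cs(3) cd_sym[of yF "F.X \<omega> \<phi>2 t"] by linarith
        qed
        have "(a - \<delta>) * (1 - 2 * \<delta>) ^ (P - 1) * sepF \<omega> t \<le> sepF \<omega> (t + P)"
          unfolding sepF_def
          by (rule F.step_some[OF om kP sy w1(1) plF _ num[OF kF(2), unfolded \<eta>_def]])
             (use S ha del in \<open>auto simp: sepF_def\<close>)
        moreover have "lam * sepF \<omega> t \<le> (a - \<delta>) * (1 - \<eta>) ^ (P - 1) * sepF \<omega> t" using lamle[OF lamc(2) sp0] .
        moreover have "bnd (Suc N) \<le> lam * sepF \<omega> t" using bndlam[OF cs(2) ib sp0] .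
        ultimately show ?thesis by (simp add: \<eta>_def)
      qed
    qed
    have goodB: "bnd (Suc N) \<le> sepB \<omega> (t + P)" if om: "\<omega> \<in> cylinder (t + P) \<beta>'" for \<omega>
    proof -
      have omt: "\<omega> \<in> cylinder t \<beta>" using om cylsub by blast
      have ib: "bnd N \<le> sepB \<omega> t" using IHb[OF omt] by simp
      have sp0: "0 \<le> sepB \<omega> t" by (simp add: sepB_def cd_nonneg)
      show ?thesis
      proof (cases "cB = None")
        case True
        have z: "\<beta>' (- int (t + i) - 1) = 0" if "i < P" for i using symB[OF that] True by simp
        have st: "(1 - \<eta>) ^ P * sepB \<omega> t \<le> sepB \<omega> (t + P)"
          using B.step_none[OF om z] by (simp add: sepB_def \<eta>_def)
        show ?thesis
        proof (cases "N < Npad")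
          case True
          have "bnd (Suc N) \<le> (1 - \<eta>) ^ P * bnd N" using bndpre[OF True] .
          also have "\<dots> \<le> (1 - \<eta>) ^ P * sepB \<omega> t" using ib eta by (intro mult_left_mono) auto
          finally show ?thesis using st by linarith
        next
          case False
          then have ref: "\<not> circ_dist xB yB < s1" using \<open>cB = None\<close> by (auto simp: cB_def split: if_splits)
          have w1: "circ_dist (B.X \<omega> \<phi>1 t) xB \<le> \<epsilon>" "circ_dist (B.X \<omega> \<phi>2 t) yB \<le> \<epsilon>"
            using wid[OF _ omt \<beta>c] False by (auto simp: xB_def yB_def)
          have "circ_dist xB yB \<le> circ_dist xB (B.X \<omega> \<phi>1 t) + circ_dist (B.X \<omega> \<phi>1 t) yB" by (rule cd_triangle)
          also have "circ_dist (B.X \<omega> \<phi>1 t) yB \<le> sepB \<omega> t + circ_dist (B.X \<omega> \<phi>2 t) yB"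
            unfolding sepB_def by (rule cd_triangle)
          finally have "s1 - 2 * \<epsilon> \<le> sepB \<omega> t" using ref w1 cd_sym[of xB "B.X \<omega> \<phi>1 t"] by linarith
          then have "slow \<le> (1 - \<eta>) ^ P * sepB \<omega> t" unfolding slow_def using eta by (intro mult_left_mono) auto
          then show ?thesis using st bndpost False by linarith
        qed
      next
        case False
        then have cs: "cB = Some kB" "Npad \<le> N" "circ_dist xB yB < s1" by (auto simp: cB_def split: if_splits)
        have kP: "kB < P" using kv[OF kB(2)] by simp
        have sy: "\<beta>' (- int (t + i) - 1) = (if i = kB then 1 else 0)" if "i < P" for i using symB[OF that] cs(1) by auto
        have w1: "circ_dist (B.X \<omega> \<phi>1 t) xB \<le> \<epsilon>" "circ_dist (B.X \<omega> \<phi>2 t) yB \<le> \<epsilon>"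
          using wid[OF cs(2) omt \<beta>c] by (auto simp: xB_def yB_def)
        have S: "sepB \<omega> t \<le> s1 + 2 * \<epsilon>"
        proof -
          have "sepB \<omega> t \<le> circ_dist (B.X \<omega> \<phi>1 t) xB + circ_dist xB (B.X \<omega> \<phi>2 t)" unfolding sepB_def by (rule cd_triangle)
          also have "circ_dist xB (B.X \<omega> \<phi>2 t) \<le> circ_dist xB yB + circ_dist yB (B.X \<omega> \<phi>2 t)" by (rule cd_triangle)
          finally show ?thesis using w1 cs(3) cd_sym[of yB "B.X \<omega> \<phi>2 t"] by linarith
        qed
        have l0: "0 \<le> 1 / (1/a + \<delta>)" using ha del by simp
        have "1 / (1/a + \<delta>) * (1 - 2 * \<delta>) ^ (P - 1) * sepB \<omega> t \<le> sepB \<omega> (t + P)"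
          unfolding sepB_def
          by (rule B.step_some[OF om kP sy w1(1) plB _ num[OF kB(2), unfolded \<eta>_def] l0])
             (use S in \<open>auto simp: sepB_def\<close>)
        moreover have "lam * sepB \<omega> t \<le> 1 / (1/a + \<delta>) * (1 - \<eta>) ^ (P - 1) * sepB \<omega> t" using lamle[OF lamc(3) sp0] .
        moreover have "bnd (Suc N) \<le> lam * sepB \<omega> t" using bndlam[OF cs(2) ib sp0] .
        ultimately show ?thesis by (simp add: \<eta>_def)
      qed
    qed
    have "Inv (Suc N) pf' pb'"
      unfolding Inv_def
    proof (intro conjI ballI)
      show "\<forall>j<Suc N. validp T P (pf' j) \<and> validp T P (pb' j)"
        using IH vF vB by (auto simp: Inv_def pf'_def pb'_def less_Suc_eq)
    next
      fix \<omega> assume "\<omega> \<in> cylinder (n + Suc N * P) (mkword w n P pf' pb')"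
      then have om: "\<omega> \<in> cylinder (t + P) \<beta>'" unfolding tP \<beta>'_def .
      show "bnd (Suc N) \<le> sepF \<omega> (n + Suc N * P)" unfolding tP by (rule goodF[OF om])
      show "bnd (Suc N) \<le> sepB \<omega> (n + Suc N * P)" unfolding tP by (rule goodB[OF om])
    qed
    then show ?thesis by blast
  qed
  have allN: "\<exists>pf pb. Inv N pf pb" for N
  proof (induction N)
    case 0 then show ?case using base by blast
  next
    case (Suc N) then show ?case using step by blast
  qed
  have s00: "0 < s0" using sinit0 eta del by (simp add: s0_def \<eta>_def)
  obtain k where k: "slow / s0 < lam ^ k" using real_arch_pow[OF lam1] by blast
  define NF where "NF = Npad + Suc k"
  have NF1: "1 \<le> NF" by (simp add: NF_def)
  have "slow \<le> s0 * lam ^ (NF - Npad)"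
  proof -
    have "lam ^ k \<le> lam ^ Suc k" using lam1 by (intro power_increasing) auto
    then have "slow / s0 < lam ^ Suc k" using k by linarith
    then show ?thesis using s00 by (simp add: NF_def field_simps)
  qed
  then have bF: "bnd NF = slow" by (simp add: bnd_def NF_def)
  obtain pf pb where inv: "Inv NF pf pb" using allN by blast
  define m where "m = n + NF * P"
  define \<beta> where "\<beta> = mkword w n P pf pb"
  have \<beta>s: "\<beta> \<in> Sigma2" by (simp add: \<beta>_def sig)
  have sepm: "slow \<le> sepF \<omega> m \<and> slow \<le> sepB \<omega> m" if "\<omega> \<in> cylinder m \<beta>" for \<omega>
    using inv that bF by (simp add: Inv_def m_def \<beta>_def)
  have widm: "circ_dist (F.X \<omega> x m) (F.X \<omega>' x m) \<le> \<epsilon> \<and> circ_dist (B.X \<omega> x m) (B.X \<omega>' x m) \<le> \<epsilon>"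
    if "\<omega> \<in> cylinder m \<beta>" "\<omega>' \<in> cylinder m \<beta>" for \<omega> \<omega>' x
    using width_ok[OF Np[of NF]] that by (simp add: m_def \<beta>_def NF_def)
  have fin: "2 * b \<le> slow - \<epsilon>" using d7 by (simp add: slow_def \<eta>_def)
  have Vp: "set_circ_dist (Vplus f m \<beta> \<phi>1) (Vplus f m \<beta> \<phi>2) \<ge> 2 * b"
    unfolding set_circ_dist_def
  proof (rule cInf_greatest)
    show "{circ_dist x y |x y. x \<in> Vplus f m \<beta> \<phi>1 \<and> y \<in> Vplus f m \<beta> \<phi>2} \<noteq> {}"
      using self_cyl[OF \<beta>s, of m] by (auto simp: Vplus_def)
  next
    fix d assume "d \<in> {circ_dist x y |x y. x \<in> Vplus f m \<beta> \<phi>1 \<and> y \<in> Vplus f m \<beta> \<phi>2}"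
    then obtain \<omega> \<omega>' where oo: "\<omega> \<in> cylinder m \<beta>" "\<omega>' \<in> cylinder m \<beta>"
      and d: "d = circ_dist (fwd f m \<omega> \<phi>1) (fwd f m \<omega>' \<phi>2)" by (auto simp: Vplus_def)
    have d2: "d = circ_dist (F.X \<omega> \<phi>1 m) (F.X \<omega>' \<phi>2 m)" using d by (simp add: fwd_comp)
    have "sepF \<omega> m \<le> d + circ_dist (F.X \<omega>' \<phi>2 m) (F.X \<omega> \<phi>2 m)"
      unfolding sepF_def d2 by (rule cd_triangle)
    moreover have "circ_dist (F.X \<omega>' \<phi>2 m) (F.X \<omega> \<phi>2 m) \<le> \<epsilon>" using widm[OF oo(2,1)] by simp
    ultimately show "2 * b \<le> d" using sepm[OF oo(1)] fin by linarith
  qed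
  have Vm: "set_circ_dist (Vminus f m \<beta> \<phi>1) (Vminus f m \<beta> \<phi>2) \<ge> 2 * b"
    unfolding set_circ_dist_def
  proof (rule cInf_greatest)
    show "{circ_dist x y |x y. x \<in> Vminus f m \<beta> \<phi>1 \<and> y \<in> Vminus f m \<beta> \<phi>2} \<noteq> {}"
      using self_cyl[OF \<beta>s, of m] by (auto simp: Vminus_def)
  next
    fix d assume "d \<in> {circ_dist x y |x y. x \<in> Vminus f m \<beta> \<phi>1 \<and> y \<in> Vminus f m \<beta> \<phi>2}"
    then obtain \<omega> \<omega>' where oo: "\<omega> \<in> cylinder m \<beta>" "\<omega>' \<in> cylinder m \<beta>"
      and d: "d = circ_dist (bwd f m \<omega> \<phi>1) (bwd f m \<omega>' \<phi>2)" by (auto simp: Vminus_def)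
    have d2: "d = circ_dist (B.X \<omega> \<phi>1 m) (B.X \<omega>' \<phi>2 m)" using d by (simp add: bwd_comp)
    have "sepB \<omega> m \<le> d + circ_dist (B.X \<omega>' \<phi>2 m) (B.X \<omega> \<phi>2 m)"
      unfolding sepB_def d2 by (rule cd_triangle)
    moreover have "circ_dist (B.X \<omega>' \<phi>2 m) (B.X \<omega> \<phi>2 m) \<le> \<epsilon>" using widm[OF oo(2,1)] by simp
    ultimately show "2 * b \<le> d" using sepm[OF oo(1)] fin by linarith
  qed
  have v: "\<forall>j<NF. validp T P (pf j)" "\<forall>j<NF. validp T P (pb j)" using inv by (auto simp: Inv_def)
  have zf: "zero_blocks_ge T \<beta> (int n) (int m)" unfolding \<beta>_def m_def by (rule zb_fwd[OF P0 TP NF1 v(1)])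
  have zbk: "zero_blocks_ge T \<beta> (- int m) (- int n)" unfolding \<beta>_def m_def by (rule zb_bwd[OF P0 TP NF1 v(2) T0])
  have b1: "\<forall>i. - int m \<le> i \<and> i < int m \<longrightarrow> \<beta> i \<le> 1" using \<beta>s by (simp add: Sigma2_def)
  have bw: "\<forall>i. - int n \<le> i \<and> i < int n \<longrightarrow> \<beta> i = w i" by (simp add: \<beta>_def mk_w)
  have nm: "n \<le> m" by (simp add: m_def)
  show ?thesis using nm b1 bw zbk zf Vp Vm by blast
qed

end


lemma ev_lt: "((g :: real \<Rightarrow> real) \<longlongrightarrow> l) (at_right 0) \<Longrightarrow> l < u \<Longrightarrow> eventually (\<lambda>x. g x < u) (at_right 0)"
  by (rule order_tendstoD(2))

lemma ev_gt: "((g :: real \<Rightarrow> real) \<longlongrightarrow> l) (at_right 0) \<Longrightarrow> u < l \<Longrightarrow> eventually (\<lambda>x. u < g x) (at_right 0)"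
  by (rule order_tendstoD(1))

theorem lemma8:
  fixes b a C \<alpha> :: real and g1 :: "real \<Rightarrow> real" and T :: nat
  assumes "0 < b" and "b < 1/100"
    and "a > 1"
    and "circle_diffeo g1"
    and "{frac x | x. nonwandering g1 x} = {0, 1/2}"
    and "\<forall>x. \<bar>x\<bar> < 1/8 \<longrightarrow> g1 x = a * x"
    and "\<forall>x. \<bar>x - 1/2\<bar> < 1/8 \<longrightarrow> g1 x = 1/2 + (x - 1/2) / a"
    and "T > 0"
  shows "\<exists>\<delta>0>0. \<forall>\<delta> f. 0 < \<delta> \<and> \<delta> < \<delta>0 \<and> mild_skew b g1 \<delta> C \<alpha> f \<longrightarrow>
     (\<forall>n w \<phi>1 \<phi>2. (\<forall>i. - int n \<le> i \<and> i < int n \<longrightarrow> w i \<le> 1) \<and> frac \<phi>1 \<noteq> frac \<phi>2 \<longrightarrow>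
        (\<exists>m \<beta>. n \<le> m
           \<and> (\<forall>i. - int m \<le> i \<and> i < int m \<longrightarrow> \<beta> i \<le> 1)
           \<and> (\<forall>i. - int n \<le> i \<and> i < int n \<longrightarrow> \<beta> i = w i)
           \<and> zero_blocks_ge T \<beta> (- int m) (- int n)
           \<and> zero_blocks_ge T \<beta> (int n) (int m)
           \<and> set_circ_dist (Vplus f m \<beta> \<phi>1) (Vplus f m \<beta> \<phi>2) \<ge> 2 * b
           \<and> set_circ_dist (Vminus f m \<beta> \<phi>1) (Vminus f m \<beta> \<phi>2) \<ge> 2 * b))"
proof -
  note hb = assms(1) and hb1 = assms(2) and ha = assms(3) and g = assms(4) and l0 = assms(6) and lh = assms(7) and T0 = assms(8)
  note gf = g1_facts[OF ha g l0 lh]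
  have da: "deriv g1 0 = a" using gf(1)[of 0] by simp
  obtain mg Mg where mgM: "0 < mg" "\<And>x. mg \<le> deriv g1 x \<and> deriv g1 x \<le> Mg"
    using cdiff_deriv_bounds[OF g] by blast
  have aM: "a \<le> Mg" using mgM(2)[of 0] da by simp
  define \<mu> where "\<mu> = min 1 mg / 2"
  have mu0: "0 < \<mu>" using mgM(1) by (simp add: \<mu>_def)
  define G where "G = max (Mg + 1) (max (1/\<mu>) 2)"
  have GG: "Mg + 1 \<le> G" "1 / \<mu> \<le> G" "2 \<le> G" by (auto simp: G_def)
  show ?thesis
  proof (cases "\<alpha> \<le> 0")
    case True
    have nf: "False" if h: "0 < \<delta>" "\<delta> < (a - 1)/2" "mild_skew b g1 \<delta> C \<alpha> f" for \<delta> f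
    proof -
      define \<omega>1 :: "int \<Rightarrow> nat" where "\<omega>1 = (\<lambda>_. 1)"
      have o1: "\<omega>1 \<in> Sigma2" by (simp add: \<omega>1_def Sigma2_def)
      have gb': "\<And>x. 0 \<le> deriv g1 x \<and> deriv g1 x \<le> Mg" using mgM by (meson less_eq_real_def order_trans)
      have "\<bar>deriv (f \<omega>1) 0 - (if \<omega>1 0 = 0 then 1 else deriv g1 0)\<bar> < \<delta>" by (rule ms_extract(3)[OF h(3) o1 g gb'])
      then have "\<bar>deriv (f \<omega>1) 0 - deriv g1 0\<bar> < \<delta>" by (simp add: \<omega>1_def)
      then have d1: "a - \<delta> < deriv (f \<omega>1) 0" using da by (simp add: abs_less_iff)
      obtain L where L: "L < 2 powr \<alpha>" "\<bar>deriv (f \<omega>1) 0\<bar> \<le> L" using h(3) o1 unfolding mild_skew_def by blast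
      have "2 powr \<alpha> \<le> 2 powr 0" using True by (intro powr_mono) auto
      then have "L < 1" using L by simp
      moreover have "deriv (f \<omega>1) 0 \<le> L" using L(2) by (simp add: abs_le_iff)
      ultimately have "a - \<delta> < 1" using d1 by linarith
      then show False using h(2) ha by argo
    qed
    show ?thesis
    proof (rule exI[of _ "(a - 1)/2"], rule conjI)
      show "0 < (a - 1)/2" using ha by simp
    qed (use nf in blast)
  next
    case False
    then have a0: "0 < \<alpha>" by simp
    define \<epsilon> :: real where "\<epsilon> = 1/10000"
    define s1 where "s1 = 2*b + 1/1000"
    define K0 where "K0 = nat \<lceil>1/b\<rceil>"
    define c where "c = 2 powr (\<alpha>/4)"
    have c1: "1 < c"
    proof -
      have "2 powr 0 < 2 powr (\<alpha>/4)" using a0 by (intro powr_less_mono) auto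
      then show ?thesis by (simp add: c_def)
    qed
    obtain P1 where P1: "G < c ^ P1" using real_arch_pow[OF c1] by blast
    define P where "P = max P1 (2*T + K0 + 1)"
    have PT: "2*T + K0 + 1 \<le> P" by (simp add: P_def)
    have Gc: "G \<le> c ^ P"
    proof -
      have "c ^ P1 \<le> c ^ P" using c1 by (intro power_increasing) (auto simp: P_def)
      then show ?thesis using P1 by linarith
    qed
    define r where "r = (c ^ P)\<^sup>2"
    have r0: "0 < r" using c1 by (simp add: r_def)
    define Cm where "Cm = max C 0"
    define Kt where "Kt = real P * (Cm/\<mu>) * r\<^sup>2"
    have Kt0: "0 \<le> Kt" using mu0 by (simp add: Kt_def Cm_def)
    obtain I where I: "(1/2::real) ^ I < \<epsilon>/3 / (Kt + 1)"
      using real_arch_pow_inv[of "\<epsilon>/3 / (Kt + 1)" "1/2::real"] Kt0 by (auto simp: \<epsilon>_def)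
    have tailC: "Kt * (1/2) ^ I \<le> \<epsilon>/3"
    proof -
      have "(Kt + 1) * (1/2::real) ^ I \<le> \<epsilon>/3" using I Kt0 by (simp add: field_simps)
      moreover have "Kt * (1/2::real) ^ I \<le> (Kt + 1) * (1/2) ^ I" by (intro mult_right_mono) auto
      ultimately show ?thesis by linarith
    qed
    define lamc where "lamc = (1 + a)/2"
    have a38: "a < 19/5" by (rule gf(3))
    have evs: "eventually (\<lambda>\<delta>. \<delta> < \<mu> \<and> \<delta> < 1/10 \<and> \<delta> < 12/100/a - 3/100 \<and> 1 + 2*\<delta> < c
        \<and> real I * (r ^ I * (real P * (2/\<mu> * \<delta>))) < \<epsilon>/3
        \<and> lamc < a - \<delta> \<and> lamc < 1/(1/a + \<delta>) \<and> 1 < lamc * (1 - 2*\<delta>) ^ P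
        \<and> b/2 + \<epsilon> + real (T+K0) * \<delta> + (1+2*\<delta>) ^ (T+K0) * (s1 + 2*\<epsilon>) < 3/100
        \<and> 2*b < (1-2*\<delta>) ^ P * (s1 - 2*\<epsilon>) - \<epsilon>) (at_right 0)"
    proof (intro eventually_conj)
      have id: "((\<lambda>x::real. x) \<longlongrightarrow> 0) (at_right 0)" by (rule tendsto_ident_at)
      show "eventually (\<lambda>\<delta>::real. \<delta> < \<mu>) (at_right 0)" by (rule ev_lt[OF id mu0])
      show "eventually (\<lambda>\<delta>::real. \<delta> < 1/10) (at_right 0)" by (rule ev_lt[OF id]) simp
      have "0 < 12/100/a - 3/100" using a38 ha by (simp add: field_simps)
      then show "eventually (\<lambda>\<delta>::real. \<delta> < 12/100/a - 3/100) (at_right 0)" by (rule ev_lt[OF id])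
      have "((\<lambda>\<delta>::real. 1 + 2*\<delta>) \<longlongrightarrow> 1 + 2*0) (at_right 0)" by (intro tendsto_intros id)
      then show "eventually (\<lambda>\<delta>::real. 1 + 2*\<delta> < c) (at_right 0)" by (rule ev_lt) (use c1 in auto)
      have "((\<lambda>\<delta>::real. real I * (r ^ I * (real P * (2/\<mu> * \<delta>)))) \<longlongrightarrow> real I * (r ^ I * (real P * (2/\<mu> * 0)))) (at_right 0)"
        by (intro tendsto_intros id)
      then show "eventually (\<lambda>\<delta>::real. real I * (r ^ I * (real P * (2/\<mu> * \<delta>))) < \<epsilon>/3) (at_right 0)"
        by (rule ev_lt) (simp add: \<epsilon>_def)
      have "((\<lambda>\<delta>::real. a - \<delta>) \<longlongrightarrow> a - 0) (at_right 0)" by (intro tendsto_intros id)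
      then show "eventually (\<lambda>\<delta>::real. lamc < a - \<delta>) (at_right 0)" by (rule ev_gt) (use ha in \<open>auto simp: lamc_def\<close>)
      have "((\<lambda>\<delta>::real. 1/(1/a + \<delta>)) \<longlongrightarrow> 1/(1/a + 0)) (at_right 0)" using ha by (intro tendsto_intros id) auto
      then show "eventually (\<lambda>\<delta>::real. lamc < 1/(1/a + \<delta>)) (at_right 0)" by (rule ev_gt) (use ha in \<open>auto simp: lamc_def\<close>)
      have "((\<lambda>\<delta>::real. lamc * (1 - 2*\<delta>) ^ P) \<longlongrightarrow> lamc * (1 - 2*0) ^ P) (at_right 0)" by (intro tendsto_intros id)
      then show "eventually (\<lambda>\<delta>::real. 1 < lamc * (1 - 2*\<delta>) ^ P) (at_right 0)" by (rule ev_gt) (use ha in \<open>auto simp: lamc_def\<close>)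
      have "((\<lambda>\<delta>::real. b/2 + \<epsilon> + real (T+K0) * \<delta> + (1+2*\<delta>) ^ (T+K0) * (s1 + 2*\<epsilon>)) \<longlongrightarrow>
           b/2 + \<epsilon> + real (T+K0) * 0 + (1+2*0) ^ (T+K0) * (s1 + 2*\<epsilon>)) (at_right 0)" by (intro tendsto_intros id)
      then show "eventually (\<lambda>\<delta>::real. b/2 + \<epsilon> + real (T+K0) * \<delta> + (1+2*\<delta>) ^ (T+K0) * (s1 + 2*\<epsilon>) < 3/100) (at_right 0)"
        by (rule ev_lt) (use hb1 in \<open>auto simp: \<epsilon>_def s1_def\<close>)
      have "((\<lambda>\<delta>::real. (1-2*\<delta>) ^ P * (s1 - 2*\<epsilon>) - \<epsilon>) \<longlongrightarrow> (1-2*0) ^ P * (s1 - 2*\<epsilon>) - \<epsilon>) (at_right 0)" by (intro tendsto_intros id)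
      then show "eventually (\<lambda>\<delta>::real. 2*b < (1-2*\<delta>) ^ P * (s1 - 2*\<epsilon>) - \<epsilon>) (at_right 0)"
        by (rule ev_gt) (auto simp: \<epsilon>_def s1_def)
    qed
    then obtain \<delta>0 where d0: "\<delta>0 > 0" and d0h: "\<And>\<delta>. 0 < \<delta> \<Longrightarrow> \<delta> < \<delta>0 \<Longrightarrow> \<delta> < \<mu> \<and> \<delta> < 1/10 \<and> \<delta> < 12/100/a - 3/100 \<and> 1 + 2*\<delta> < c
        \<and> real I * (r ^ I * (real P * (2/\<mu> * \<delta>))) < \<epsilon>/3
        \<and> lamc < a - \<delta> \<and> lamc < 1/(1/a + \<delta>) \<and> 1 < lamc * (1 - 2*\<delta>) ^ P
        \<and> b/2 + \<epsilon> + real (T+K0) * \<delta> + (1+2*\<delta>) ^ (T+K0) * (s1 + 2*\<epsilon>) < 3/100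
        \<and> 2*b < (1-2*\<delta>) ^ P * (s1 - 2*\<epsilon>) - \<epsilon>"
      unfolding eventually_at_right_field by auto
    show ?thesis
    proof (intro exI[of _ \<delta>0] conjI allI impI d0)
      fix \<delta> :: real and f :: "(int \<Rightarrow> nat) \<Rightarrow> real \<Rightarrow> real" and n :: nat and w :: "int \<Rightarrow> nat" and \<phi>1 \<phi>2 :: real
      assume h: "0 < \<delta> \<and> \<delta> < \<delta>0 \<and> mild_skew b g1 \<delta> C \<alpha> f"
        and hw: "(\<forall>i. - int n \<le> i \<and> i < int n \<longrightarrow> w i \<le> 1) \<and> frac \<phi>1 \<noteq> frac \<phi>2"
      have ms: "mild_skew b g1 \<delta> C \<alpha> f" using h by simp
      note D = d0h[of \<delta>] h
      have C0: "0 \<le> C"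
      proof (rule ccontr)
        assume "\<not> 0 \<le> C"
        define \<omega>a :: "int \<Rightarrow> nat" where "\<omega>a = (\<lambda>_. 0)"
        define \<omega>b :: "int \<Rightarrow> nat" where "\<omega>b = (\<lambda>_. 1)"
        have oo: "\<omega>a \<in> Sigma2" "\<omega>b \<in> Sigma2" by (auto simp: \<omega>a_def \<omega>b_def Sigma2_def)
        have "circ_dist (f \<omega>a 0) (f \<omega>b 0) \<le> C * dSigma \<omega>a \<omega>b powr \<alpha>" using ms oo unfolding mild_skew_def by blast
        moreover have "0 < dSigma \<omega>a \<omega>b powr \<alpha>"
        proof -
          have "\<omega>a \<noteq> \<omega>b" by (auto simp: \<omega>a_def \<omega>b_def fun_eq_iff)
          then have "0 < dSigma \<omega>a \<omega>b" by (simp add: dSigma_def)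
          then show ?thesis by simp
        qed
        ultimately have "circ_dist (f \<omega>a 0) (f \<omega>b 0) < 0" using \<open>\<not> 0 \<le> C\<close> by (smt (verit) mult_neg_pos)
        then show False using cd_nonneg by (metis not_le)
      qed
      have CmC: "Cm = C" using C0 by (simp add: Cm_def)
      interpret M: mainctx b a C \<alpha> \<delta> mg Mg \<mu> G g1 f T P K0 I c r \<epsilon> s1 lamc
      proof (unfold_locales)
        show "mild_skew b g1 \<delta> C \<alpha> f" by (rule ms)
        show "a > 1" by (rule ha)
        show "circle_diffeo g1" by (rule g)
        show "\<forall>x. \<bar>x\<bar> < 1/8 \<longrightarrow> g1 x = a * x" by (rule l0)
        show "\<forall>x. \<bar>x - 1/2\<bar> < 1/8 \<longrightarrow> g1 x = 1/2 + (x - 1/2) / a" by (rule lh)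
        show "\<And>x. mg \<le> deriv g1 x \<and> deriv g1 x \<le> Mg" by (rule mgM(2))
        show "0 < mg" by (rule mgM(1))
        show "\<mu> = min 1 mg / 2" by (rule \<mu>_def)
        show "Mg + 1 \<le> G" "1 / \<mu> \<le> G" "2 \<le> G" by (rule GG)+
        show "0 < \<delta>" "\<delta> \<le> \<mu>" "\<delta> \<le> 1/10" "\<delta> < 12/100/a - 3/100" using D by auto
        show "0 < \<alpha>" by (rule a0)
        show "0 \<le> C" by (rule C0)
        show "0 < T" by (rule T0)
        show "0 < b" "b < 1/100" by (rule hb, rule hb1)
        show "K0 = nat \<lceil>1/b\<rceil>" by (rule K0_def)
        show "2*T + K0 + 1 \<le> P" by (rule PT)
        show "c = 2 powr (\<alpha>/4)" by (rule c_def)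
        show "G \<le> c ^ P" by (rule Gc)
        show "r = (c ^ P)\<^sup>2" by (rule r_def)
        show "1 + 2*\<delta> \<le> c" using D by auto
        show "\<epsilon> = 1/10000" by (rule \<epsilon>_def)
        show "s1 = 2*b + 1/1000" by (rule s1_def)
        show "real I * (r ^ I * (real P * (2/\<mu> * \<delta>))) \<le> \<epsilon>/3" using D by auto
        show "real P * (C/\<mu>) * r\<^sup>2 * (1/2) ^ I \<le> \<epsilon>/3" using tailC by (simp add: Kt_def CmC)
        show "lamc = (1+a)/2" by (rule lamc_def)
        show "lamc \<le> a - \<delta>" "lamc \<le> 1/(1/a + \<delta>)" using D by auto
        show "1 < lamc * (1 - 2*\<delta>) ^ P" using D by auto
        show "b/2 + \<epsilon> + real (T+K0) * \<delta> + (1+2*\<delta>) ^ (T+K0) * (s1 + 2*\<epsilon>) < 3/100" using D by auto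
        show "2*b \<le> (1-2*\<delta>) ^ P * (s1 - 2*\<epsilon>) - \<epsilon>" using D by auto
      qed
      show "\<exists>m \<beta>. n \<le> m
           \<and> (\<forall>i. - int m \<le> i \<and> i < int m \<longrightarrow> \<beta> i \<le> 1)
           \<and> (\<forall>i. - int n \<le> i \<and> i < int n \<longrightarrow> \<beta> i = w i)
           \<and> zero_blocks_ge T \<beta> (- int m) (- int n)
           \<and> zero_blocks_ge T \<beta> (int n) (int m)
           \<and> set_circ_dist (Vplus f m \<beta> \<phi>1) (Vplus f m \<beta> \<phi>2) \<ge> 2 * b
           \<and> set_circ_dist (Vminus f m \<beta> \<phi>1) (Vminus f m \<beta> \<phi>2) \<ge> 2 * b"
        using M.main[of n w \<phi>1 \<phi>2] hw by blast
    qed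
  qed
qed

end
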